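(* Let $0\le\delta\le 0.011$ and let $\mathcal{I}$ be a $\delta$-ONI instance with $n$ agents such that $|N^1_1|\le n\left(\frac14-\delta\right)/\left(\frac14+\frac{\delta}{3}\right)$. Then Algorithm $\mathtt{approxMMS1}(\mathcal{I},\delta)$ (for every resolution of its arbitrary choices) returns a $\left(\frac34+\delta\right)$-MMS allocation of $\mathcal{I}$.
   Context: An instance has agents $N=[n]$, goods $M$, additive valuations $v_i:2^M\to\mathbb{R}_{\ge0}$; $\mathrm{MMS}^d_v(S)$ is the max over partitions of $S$ into $d$ bundles of the minimum bundle value, $\mathrm{MMS}_i=\mathrm{MMS}^n_{v_i}(M)$; an allocation (disjoint bundles $A_i$) is $\beta$-MMS if $v_i(A_i)\ge\beta\mathrm{MMS}_i$ for all $i$. Ordered: $M=[m]$ and $v_i(1)\ge\dots\ge v_i(m)$ for all $i$. Normalized: every agent $i$ has an MMS partition all of whose $n$ bundles have value exactly $1$ to $i$ (so $\mathrm{MMS}_i=1$). For an ordered instance with $n$ agents and threshold $\alpha$, the instance is $\alpha$-irreducible if for every agent $i$: $v_i(1)<\alpha$, $v_i(\{2n-1,2n,2n+1\})<\alpha$, $v_i(\{3n-2,3n-1,3n,3n+1\})<\alpha$ and $v_i(\{1,2n+1\})<\alpha$. It is $\delta$-ONI if ordered, normalized and $(3/4+\delta)$-irreducible. Goods with index larger than $m$, when referred to, are dummy goods of value $0$. Let $B_k=\{k,2n-k+1\}$ for $k\in[n]$; $N^1=\{i: v_i(B_k)\le1\text{ for all }k\in[n]\}$, $N^2=N\setminus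 N^1$, $N^1_1=\{i\in N^1: v_i(2n+1)\ge\frac14-5\delta\}$, $N^1_2=N^1\setminus N^1_1$ (computed on the input instance and fixed). Algorithm $\mathtt{approxMMS1}(\mathcal{I},\delta)$: let $\alpha=3/4+\delta$ and start with bags $B_1,\dots,B_n$, all agents and bags unassigned. Phase 1: while some unassigned agent $i$ and unassigned bag $B$ satisfy $v_i(B)\ge\alpha$, assign such a bag $B$ to an agent $i$ with $v_i(B)\ge\alpha$, choosing an agent of $N^1_1$ whenever one qualifies. Phase 2: process the remaining bags one by one; for the current bag $B$, while no unassigned agent values $B$ at least $\alpha$, add to $B$ an arbitrary not-yet-used good outside $[2n]$; then assign $B$ to an unassigned agent $i$ with $v_i(B)\ge\alpha$, choosing an agent of $N^1_1$ whenever one qualifies. The output gives each agent the bag assigned to it. *)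

theory Defs
  imports Complex_Main
begin

text \<open>Agents are 1..n, goods are 1..m. A valuation profile is v :: nat => nat => real,
  v i g = value of good g to agent i. Indices outside 1..m are dummy goods of value 0.\<close>

definition val :: "nat \<Rightarrow> (nat \<Rightarrow> nat \<Rightarrow> real) \<Rightarrow> nat \<Rightarrow> nat set \<Rightarrow> real" where
  "val m v i S = (\<Sum>g\<in>S \<inter> {1..m}. v i g)"

definition is_partition :: "nat \<Rightarrow> nat set \<Rightarrow> (nat \<Rightarrow> nat set) \<Rightarrow> bool" where
  "is_partition d S P \<longleftrightarrow> (\<Union>j\<in>{1..d}. P j) = S \<and>
     (\<forall>j\<in>{1..d}. \<forall>j'\<in>{1..d}. j \<noteq> j' \<longrightarrow> P j \<inter> P j' = {})"

definition MMS :: "nat \<Rightarrow> (nat \<Rightarrow> nat \<Rightarrow> real) \<Rightarrow> nat \<Rightarrow> nat \<Rightarrow> nat set \<Rightarrow> real" where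
  "MMS m v i d S = Max ((\<lambda>P. Min ((\<lambda>j. val m v i (P j)) ` {1..d})) ` {P. is_partition d S P})"

definition additive_instance :: "nat \<Rightarrow> nat \<Rightarrow> (nat \<Rightarrow> nat \<Rightarrow> real) \<Rightarrow> bool" where
  "additive_instance n m v \<longleftrightarrow> (\<forall>i\<in>{1..n}. \<forall>g\<in>{1..m}. v i g \<ge> 0)"

definition ordered :: "nat \<Rightarrow> nat \<Rightarrow> (nat \<Rightarrow> nat \<Rightarrow> real) \<Rightarrow> bool" where
  "ordered n m v \<longleftrightarrow> (\<forall>i\<in>{1..n}. \<forall>g\<in>{1..m}. \<forall>h\<in>{1..m}. g \<le> h \<longrightarrow> v i g \<ge> v i h)"

definition normalized :: "nat \<Rightarrow> nat \<Rightarrow> (nat \<Rightarrow> nat \<Rightarrow> real) \<Rightarrow> bool" where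
  "normalized n m v \<longleftrightarrow> (\<forall>i\<in>{1..n}. \<exists>P. is_partition n {1..m} P \<and>
       MMS m v i n {1..m} = Min ((\<lambda>j. val m v i (P j)) ` {1..n}) \<and>
       (\<forall>j\<in>{1..n}. val m v i (P j) = 1))"

definition irreducible :: "nat \<Rightarrow> nat \<Rightarrow> (nat \<Rightarrow> nat \<Rightarrow> real) \<Rightarrow> real \<Rightarrow> bool" where
  "irreducible n m v \<alpha> \<longleftrightarrow> (\<forall>i\<in>{1..n}.
      val m v i {1} < \<alpha> \<and>
      val m v i {2*n-1, 2*n, 2*n+1} < \<alpha> \<and>
      val m v i {3*n-2, 3*n-1, 3*n, 3*n+1} < \<alpha> \<and>
      val m v i {1, 2*n+1} < \<alpha>)"

definition ONI :: "real \<Rightarrow> nat \<Rightarrow> nat \<Rightarrow> (nat \<Rightarrow> nat \<Rightarrow> real) \<Rightarrow> bool" where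
  "ONI \<delta> n m v \<longleftrightarrow> additive_instance n m v \<and> ordered n m v \<and> normalized n m v \<and>
      irreducible n m v (3/4 + \<delta>)"

definition initbag :: "nat \<Rightarrow> nat \<Rightarrow> nat set" where
  "initbag n k = {k, 2*n - k + 1}"

definition N1 :: "nat \<Rightarrow> nat \<Rightarrow> (nat \<Rightarrow> nat \<Rightarrow> real) \<Rightarrow> nat set" where
  "N1 n m v = {i\<in>{1..n}. \<forall>k\<in>{1..n}. val m v i (initbag n k) \<le> 1}"

definition N11 :: "real \<Rightarrow> nat \<Rightarrow> nat \<Rightarrow> (nat \<Rightarrow> nat \<Rightarrow> real) \<Rightarrow> nat set" where
  "N11 \<delta> n m v = {i\<in>N1 n m v. val m v i {2*n+1} \<ge> 1/4 - 5*\<delta>}"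

text \<open>Algorithm state: phase (1 or 2), the bag currently processed in phase 2,
  contents of bags 1..n, and the assignment agent |-> bag index.\<close>
record st =
  ph :: nat
  cur :: "nat option"
  bag :: "nat \<Rightarrow> nat set"
  asg :: "nat \<Rightarrow> nat option"

definition agent_free :: "st \<Rightarrow> nat \<Rightarrow> bool" where
  "agent_free s i \<longleftrightarrow> asg s i = None"

definition bag_free :: "st \<Rightarrow> nat \<Rightarrow> bool" where
  "bag_free s k \<longleftrightarrow> (\<forall>i. asg s i \<noteq> Some k)"

definition used :: "nat \<Rightarrow> st \<Rightarrow> nat set" where
  "used n s = (\<Union>k\<in>{1..n}. bag s k)"

definition init_st :: "nat \<Rightarrow> st" where
  "init_st n = \<lparr>ph = 1, cur = None, bag = initbag n, asg = (\<lambda>_. None)\<rparr>"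

definition may_get :: "real \<Rightarrow> nat \<Rightarrow> nat \<Rightarrow> (nat \<Rightarrow> nat \<Rightarrow> real) \<Rightarrow> st \<Rightarrow> nat \<Rightarrow> nat \<Rightarrow> bool" where
  "may_get \<delta> n m v s i k \<longleftrightarrow> i \<in> {1..n} \<and> agent_free s i \<and> val m v i (bag s k) \<ge> 3/4 + \<delta> \<and>
     (i \<in> N11 \<delta> n m v \<or>
      \<not> (\<exists>j\<in>N11 \<delta> n m v. agent_free s j \<and> val m v j (bag s k) \<ge> 3/4 + \<delta>))"

definition someone_wants :: "real \<Rightarrow> nat \<Rightarrow> nat \<Rightarrow> (nat \<Rightarrow> nat \<Rightarrow> real) \<Rightarrow> st \<Rightarrow> nat \<Rightarrow> bool" where
  "someone_wants \<delta> n m v s k \<longleftrightarrow> (\<exists>i\<in>{1..n}. agent_free s i \<and> val m v i (bag s k) \<ge> 3/4 + \<delta>)"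

inductive step :: "real \<Rightarrow> nat \<Rightarrow> nat \<Rightarrow> (nat \<Rightarrow> nat \<Rightarrow> real) \<Rightarrow> st \<Rightarrow> st \<Rightarrow> bool"
  for \<delta> n m v where
  phase1_assign:
    "\<lbrakk> ph s = 1; k \<in> {1..n}; bag_free s k; may_get \<delta> n m v s i k \<rbrakk>
     \<Longrightarrow> step \<delta> n m v s (s\<lparr>asg := (asg s)(i := Some k)\<rparr>)"
| phase1_end:
    "\<lbrakk> ph s = 1; \<not> (\<exists>k\<in>{1..n}. bag_free s k \<and> someone_wants \<delta> n m v s k) \<rbrakk>
     \<Longrightarrow> step \<delta> n m v s (s\<lparr>ph := 2\<rparr>)"
| phase2_pick:
    "\<lbrakk> ph s = 2; cur s = None; k \<in> {1..n}; bag_free s k \<rbrakk>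
     \<Longrightarrow> step \<delta> n m v s (s\<lparr>cur := Some k\<rparr>)"
| phase2_add:
    "\<lbrakk> ph s = 2; cur s = Some k; \<not> someone_wants \<delta> n m v s k;
       g \<in> {1..m}; g \<notin> {1..2*n}; g \<notin> used n s \<rbrakk>
     \<Longrightarrow> step \<delta> n m v s (s\<lparr>bag := (bag s)(k := insert g (bag s k))\<rparr>)"
| phase2_assign:
    "\<lbrakk> ph s = 2; cur s = Some k; may_get \<delta> n m v s i k \<rbrakk>
     \<Longrightarrow> step \<delta> n m v s (s\<lparr>asg := (asg s)(i := Some k), cur := None\<rparr>)"

definition alloc_out :: "nat \<Rightarrow> st \<Rightarrow> nat \<Rightarrow> nat set" where
  "alloc_out m s i = (case asg s i of Some k \<Rightarrow> bag s k \<inter> {1..m} | None \<Rightarrow> {})"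

definition is_allocation :: "nat \<Rightarrow> nat \<Rightarrow> (nat \<Rightarrow> nat set) \<Rightarrow> bool" where
  "is_allocation n m A \<longleftrightarrow> (\<forall>i\<in>{1..n}. A i \<subseteq> {1..m}) \<and>
     (\<forall>i\<in>{1..n}. \<forall>j\<in>{1..n}. i \<noteq> j \<longrightarrow> A i \<inter> A j = {})"

definition beta_MMS :: "nat \<Rightarrow> nat \<Rightarrow> (nat \<Rightarrow> nat \<Rightarrow> real) \<Rightarrow> real \<Rightarrow> (nat \<Rightarrow> nat set) \<Rightarrow> bool" where
  "beta_MMS n m v \<beta> A \<longleftrightarrow> is_allocation n m A \<and>
     (\<forall>i\<in>{1..n}. val m v i (A i) \<ge> \<beta> * MMS m v i n {1..m})"

definition finished :: "nat \<Rightarrow> st \<Rightarrow> bool" where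
  "finished n s \<longleftrightarrow> (\<forall>i\<in>{1..n}. asg s i \<noteq> None)"

end

theory Submission imports Defs begin

lemma initbag_sub: "k \<in> {1..n} \<Longrightarrow> initbag n k \<subseteq> {1..2*n}"
  by (auto simp: initbag_def)

lemma initbag_disj: "k \<in> {1..n} \<Longrightarrow> k' \<in> {1..n} \<Longrightarrow> k \<noteq> k' \<Longrightarrow> initbag n k \<inter> initbag n k' = {}"
  by (auto simp: initbag_def)

lemma initbag_cover: "g \<in> {1..2*n} \<Longrightarrow> \<exists>k\<in>{1..n}. g \<in> initbag n k"
proof -
  assume g: "g \<in> {1..2*n}"
  show ?thesis
  proof (cases "g \<le> n")
    case True thus ?thesis using g by (intro bexI[of _ g]) (auto simp: initbag_def)
  next
    case False thus ?thesis using g by (intro bexI[of _ "2*n - g + 1"]) (auto simp: initbag_def)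
  qed
qed

lemma val_insert: "g \<in> {1..m} \<Longrightarrow> g \<notin> S \<Longrightarrow> val m v i (insert g S) = val m v i S + v i g"
proof -
  assume a: "g \<in> {1..m}" "g \<notin> S"
  have "insert g S \<inter> {1..m} = insert g (S \<inter> {1..m})" using a by auto
  thus ?thesis using a by (simp add: val_def)
qed

lemma val_mono: "additive_instance n m v \<Longrightarrow> i \<in> {1..n} \<Longrightarrow> S \<subseteq> T \<Longrightarrow> val m v i S \<le> val m v i T"
  unfolding val_def additive_instance_def
  by (rule sum_mono2) auto



definition "I_ph s \<longleftrightarrow> ph s = 1 \<or> ph s = 2"
definition "I_p1 n s \<longleftrightarrow> (ph s = 1 \<longrightarrow> cur s = None \<and> (\<forall>k. bag s k = initbag n k))"
definition "I_cur n s \<longleftrightarrow> (\<forall>k. cur s = Some k \<longrightarrow> ph s = 2 \<and> k \<in> {1..n} \<and> bag_free s k)"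
definition "I_asg n s \<longleftrightarrow> (\<forall>i k. asg s i = Some k \<longrightarrow> i \<in> {1..n} \<and> k \<in> {1..n})"
definition "I_inj s \<longleftrightarrow> (\<forall>i j k. asg s i = Some k \<longrightarrow> asg s j = Some k \<longrightarrow> i = j)"
definition "I_bag n m s \<longleftrightarrow> (\<forall>k. initbag n k \<subseteq> bag s k \<and> bag s k - initbag n k \<subseteq> {2*n+1..m})"
definition "I_mod n s \<longleftrightarrow> (\<forall>k. bag s k \<noteq> initbag n k \<longrightarrow> k \<in> {1..n} \<and> (\<not> bag_free s k \<or> cur s = Some k))"
definition "I_disj n s \<longleftrightarrow> (\<forall>k\<in>{1..n}. \<forall>k'\<in>{1..n}. k \<noteq> k' \<longrightarrow> bag s k \<inter> bag s k' = {})"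
definition "I_val \<delta> m v s \<longleftrightarrow> (\<forall>i k. asg s i = Some k \<longrightarrow> val m v i (bag s k) \<ge> 3/4 + \<delta>)"
definition "I_p2 \<delta> n m v s \<longleftrightarrow> (ph s = 2 \<longrightarrow> (\<forall>j\<in>{1..n}. agent_free s j \<longrightarrow> (\<forall>k\<in>{1..n}. bag_free s k \<longrightarrow>
        bag s k = initbag n k \<longrightarrow> val m v j (initbag n k) < 3/4 + \<delta>)))"
definition "I_modv \<delta> n m v s \<longleftrightarrow> (\<forall>k\<in>{1..n}. bag s k \<noteq> initbag n k \<longrightarrow> (\<forall>j\<in>{1..n}. agent_free s j \<longrightarrow>
        val m v j (bag s k) < 3/4 + \<delta> + val m v j {2*n+1}))"
definition "I_N11 \<delta> n m v s \<longleftrightarrow> (\<forall>i k. asg s i = Some k \<longrightarrow> i \<notin> N11 \<delta> n m v \<longrightarrow>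
        (\<forall>j\<in>N11 \<delta> n m v. agent_free s j \<longrightarrow> val m v j (bag s k) < 3/4 + \<delta>))"

definition ainv :: "real \<Rightarrow> nat \<Rightarrow> nat \<Rightarrow> (nat \<Rightarrow> nat \<Rightarrow> real) \<Rightarrow> st \<Rightarrow> bool" where
  "ainv \<delta> n m v s \<longleftrightarrow> I_ph s \<and> I_p1 n s \<and> I_cur n s \<and> I_asg n s \<and> I_inj s \<and> I_bag n m s \<and>
     I_mod n s \<and> I_disj n s \<and> I_val \<delta> m v s \<and> I_p2 \<delta> n m v s \<and> I_modv \<delta> n m v s \<and> I_N11 \<delta> n m v s"

lemma inv_init: "ainv \<delta> n m v (init_st n)"
  unfolding ainv_def
  by (simp add: I_ph_def I_p1_def I_cur_def I_asg_def I_inj_def I_bag_def I_mod_def I_disj_def I_val_def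
     I_p2_def I_modv_def I_N11_def init_st_def initbag_disj)

lemma N11_sub: "N11 \<delta> n m v \<subseteq> {1..n}"
  by (auto simp: N11_def N1_def)

lemma may_get_in: "may_get \<delta> n m v s i k \<Longrightarrow> i \<in> {1..n} \<and> agent_free s i \<and> val m v i (bag s k) \<ge> 3/4 + \<delta>"
  by (simp add: may_get_def)

lemma af_upd: "agent_free (s\<lparr>asg := (asg s)(i := Some k)\<rparr>) j \<longleftrightarrow> j \<noteq> i \<and> agent_free s j"
  by (simp add: agent_free_def)
lemma af_upd2: "agent_free (s\<lparr>asg := (asg s)(i := Some k), cur := c\<rparr>) j \<longleftrightarrow> j \<noteq> i \<and> agent_free s j"
  by (simp add: agent_free_def)
lemma bf_upd: "agent_free s i \<Longrightarrow> bag_free (s\<lparr>asg := (asg s)(i := Some k)\<rparr>) k' \<longleftrightarrow> k' \<noteq> k \<and> bag_free s k'"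
  unfolding agent_free_def bag_free_def
  apply (rule iffI)
   apply (metis fun_upd_same fun_upd_other option.distinct(1) select_convs(4) surjective update_convs(4))
  apply simp
  done
lemma bf_upd2: "agent_free s i \<Longrightarrow> bag_free (s\<lparr>asg := (asg s)(i := Some k), cur := c\<rparr>) k' \<longleftrightarrow> k' \<noteq> k \<and> bag_free s k'"
  unfolding agent_free_def bag_free_def
  apply (rule iffI)
   apply (simp; metis fun_upd_same fun_upd_other option.distinct(1))
  apply simp
  done


lemma assign_pres:
  assumes I: "ainv \<delta> n m v s" and k: "k \<in> {1..n}" and bf: "bag_free s k"
    and mg: "may_get \<delta> n m v s i k" and c: "ph s = 1 \<or> cur s = Some k"
  shows "ainv \<delta> n m v (s\<lparr>asg := (asg s)(i := Some k), cur := None\<rparr>)" (is "ainv _ _ _ _ ?s")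
proof -
  have mi: "i \<in> {1..n}" "agent_free s i" "val m v i (bag s k) \<ge> 3/4 + \<delta>"
    using may_get_in[OF mg] by auto
  have mg2: "i \<in> N11 \<delta> n m v \<or> \<not> (\<exists>j\<in>N11 \<delta> n m v. agent_free s j \<and> val m v j (bag s k) \<ge> 3/4 + \<delta>)"
    using mg by (simp add: may_get_def)
  have fs: "ph ?s = ph s" "cur ?s = None" "bag ?s = bag s" "asg ?s = (asg s)(i := Some k)" by simp_all
  have af: "\<And>j. agent_free ?s j \<longleftrightarrow> j \<noteq> i \<and> agent_free s j" by (rule af_upd2)
  have bfs: "\<And>k'. bag_free ?s k' \<longleftrightarrow> k' \<noteq> k \<and> bag_free s k'" by (rule bf_upd2[OF mi(2)])
  have ai: "asg s i = None" using mi(2) by (simp add: agent_free_def)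
  from I have I': "I_ph s" "I_p1 n s" "I_cur n s" "I_asg n s" "I_inj s" "I_bag n m s" "I_mod n s" "I_disj n s"
     "I_val \<delta> m v s" "I_p2 \<delta> n m v s" "I_modv \<delta> n m v s" "I_N11 \<delta> n m v s" unfolding ainv_def by simp_all
  have "I_ph ?s" using I'(1) by (simp add: I_ph_def)
  moreover have "I_p1 n ?s" using I'(2) by (simp add: I_p1_def)
  moreover have "I_cur n ?s" by (simp add: I_cur_def)
  moreover have "I_asg n ?s" using I'(4) mi(1) k unfolding I_asg_def by simp
  moreover have "I_inj ?s" unfolding I_inj_def
  proof (intro allI impI)
    fix i1 i2 k' assume a: "asg ?s i1 = Some k'" "asg ?s i2 = Some k'"
    have bf': "\<And>j. asg s j \<noteq> Some k" using bf by (simp add: bag_free_def)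
    show "i1 = i2"
    proof (cases "i1 = i")
      case True thus ?thesis using a bf' by (cases "i2 = i") auto
    next
      case False
      then have "asg s i1 = Some k'" using a by simp
      moreover have "asg s i2 = Some k'" using a False bf' \<open>asg s i1 = Some k'\<close> by (cases "i2 = i") auto
      ultimately show ?thesis using I'(5) unfolding I_inj_def by blast
    qed
  qed
  moreover have "I_bag n m ?s" using I'(6) by (simp add: I_bag_def)
  moreover have "I_mod n ?s" unfolding I_mod_def
  proof (intro allI impI)
    fix k' assume a: "bag ?s k' \<noteq> initbag n k'"
    hence a': "bag s k' \<noteq> initbag n k'" by simp
    have h: "k' \<in> {1..n}" "\<not> bag_free s k' \<or> cur s = Some k'" using I'(7) a' unfolding I_mod_def by blast+
    have "\<not> bag_free ?s k'"
    proof (cases "cur s = Some k'")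
      case True
      then have "k' = k" using c I'(2) unfolding I_p1_def by auto
      thus ?thesis using bfs by simp
    next
      case False thus ?thesis using h bfs by simp
    qed
    thus "k' \<in> {1..n} \<and> (\<not> bag_free ?s k' \<or> cur ?s = Some k')" using h by simp
  qed
  moreover have "I_disj n ?s" using I'(8) by (simp add: I_disj_def)
  moreover have "I_val \<delta> m v ?s" using I'(9) mi(3) unfolding I_val_def by simp
  moreover have "I_p2 \<delta> n m v ?s" using I'(10) unfolding I_p2_def fs af bfs by simp
  moreover have "I_modv \<delta> n m v ?s" using I'(11) unfolding I_modv_def fs af by simp
  moreover have "I_N11 \<delta> n m v ?s" unfolding I_N11_def
  proof (intro allI impI ballI)
    fix i' k' j assume a: "asg ?s i' = Some k'" "i' \<notin> N11 \<delta> n m v" "j \<in> N11 \<delta> n m v" "agent_free ?s j"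
    show "val m v j (bag ?s k') < 3/4 + \<delta>"
    proof (cases "i' = i")
      case True thus ?thesis using a mg2 af by auto
    next
      case False thus ?thesis using a I'(12) af unfolding I_N11_def by auto
    qed
  qed
  ultimately show ?thesis unfolding ainv_def by blast
qed


lemma ainvD: assumes "ainv \<delta> n m v s"
  shows "I_ph s" "I_p1 n s" "I_cur n s" "I_asg n s" "I_inj s" "I_bag n m s" "I_mod n s" "I_disj n s"
     "I_val \<delta> m v s" "I_p2 \<delta> n m v s" "I_modv \<delta> n m v s" "I_N11 \<delta> n m v s"
  using assms unfolding ainv_def by simp_all

lemma end_pres:
  assumes I: "ainv \<delta> n m v s" and p: "ph s = 1"
    and nw: "\<not> (\<exists>k\<in>{1..n}. bag_free s k \<and> someone_wants \<delta> n m v s k)"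
  shows "ainv \<delta> n m v (s\<lparr>ph := 2\<rparr>)" (is "ainv _ _ _ _ ?s")
proof -
  note I' = ainvD[OF I]
  have c: "cur s = None" and b: "\<And>k. bag s k = initbag n k" using I'(2) p unfolding I_p1_def by auto
  have af: "\<And>j. agent_free ?s j = agent_free s j" by (simp add: agent_free_def)
  have bfs: "\<And>k. bag_free ?s k = bag_free s k" by (simp add: bag_free_def)
  have "I_ph ?s" by (simp add: I_ph_def)
  moreover have "I_p1 n ?s" by (simp add: I_p1_def)
  moreover have "I_cur n ?s" using c by (simp add: I_cur_def)
  moreover have "I_asg n ?s" using I'(4) by (simp add: I_asg_def)
  moreover have "I_inj ?s" using I'(5) by (simp add: I_inj_def)
  moreover have "I_bag n m ?s" using I'(6) by (simp add: I_bag_def)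
  moreover have "I_mod n ?s" using b by (simp add: I_mod_def)
  moreover have "I_disj n ?s" using I'(8) by (simp add: I_disj_def)
  moreover have "I_val \<delta> m v ?s" using I'(9) by (simp add: I_val_def)
  moreover have "I_p2 \<delta> n m v ?s" unfolding I_p2_def af bfs
  proof (intro impI ballI)
    fix j k assume a: "j \<in> {1..n}" "agent_free s j" "k \<in> {1..n}" "bag_free s k" "bag ?s k = initbag n k"
    have "\<not> someone_wants \<delta> n m v s k" using nw a by blast
    thus "val m v j (initbag n k) < 3/4 + \<delta>" using a b unfolding someone_wants_def by force
  qed
  moreover have "I_modv \<delta> n m v ?s" using b by (simp add: I_modv_def)
  moreover have "I_N11 \<delta> n m v ?s" using I'(12) unfolding I_N11_def af by simp
  ultimately show ?thesis unfolding ainv_def by blast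
qed

lemma pick_pres:
  assumes I: "ainv \<delta> n m v s" and p: "ph s = 2" and c: "cur s = None" and k: "k \<in> {1..n}" and bf: "bag_free s k"
  shows "ainv \<delta> n m v (s\<lparr>cur := Some k\<rparr>)" (is "ainv _ _ _ _ ?s")
proof -
  note I' = ainvD[OF I]
  have af: "\<And>j. agent_free ?s j = agent_free s j" by (simp add: agent_free_def)
  have bfs: "\<And>k. bag_free ?s k = bag_free s k" by (simp add: bag_free_def)
  have "I_ph ?s" using p by (simp add: I_ph_def)
  moreover have "I_p1 n ?s" using p by (simp add: I_p1_def)
  moreover have "I_cur n ?s" using p k bf bfs by (simp add: I_cur_def)
  moreover have "I_asg n ?s" using I'(4) by (simp add: I_asg_def)
  moreover have "I_inj ?s" using I'(5) by (simp add: I_inj_def)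
  moreover have "I_bag n m ?s" using I'(6) by (simp add: I_bag_def)
  moreover have "I_mod n ?s" using I'(7) c unfolding I_mod_def bfs by simp
  moreover have "I_disj n ?s" using I'(8) by (simp add: I_disj_def)
  moreover have "I_val \<delta> m v ?s" using I'(9) by (simp add: I_val_def)
  moreover have "I_p2 \<delta> n m v ?s" using I'(10) unfolding I_p2_def af bfs by simp
  moreover have "I_modv \<delta> n m v ?s" using I'(11) unfolding I_modv_def af by simp
  moreover have "I_N11 \<delta> n m v ?s" using I'(12) unfolding I_N11_def af by simp
  ultimately show ?thesis unfolding ainv_def by blast
qed

lemma val_single: "g \<in> {1..m} \<Longrightarrow> val m v i {g} = v i g"
  by (simp add: val_def)

lemma add_pres:
  assumes I: "ainv \<delta> n m v s" and ord: "ordered n m v" and p: "ph s = 2" and c: "cur s = Some k"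
    and nw: "\<not> someone_wants \<delta> n m v s k"
    and g: "g \<in> {1..m}" "g \<notin> {1..2*n}" "g \<notin> used n s"
  shows "ainv \<delta> n m v (s\<lparr>bag := (bag s)(k := insert g (bag s k))\<rparr>)" (is "ainv _ _ _ _ ?s")
proof -
  note I' = ainvD[OF I]
  have af: "\<And>j. agent_free ?s j = agent_free s j" by (simp add: agent_free_def)
  have bfs: "\<And>k. bag_free ?s k = bag_free s k" by (simp add: bag_free_def)
  have k: "k \<in> {1..n}" and bfk: "bag_free s k" using I'(3) c unfolding I_cur_def by auto
  have gk: "\<And>k'. k' \<in> {1..n} \<Longrightarrow> g \<notin> bag s k'" using g(3) unfolding used_def by blast
  have gi: "\<And>k'. k' \<in> {1..n} \<Longrightarrow> g \<notin> initbag n k'" using g(2) initbag_sub by blast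
  have notk: "\<And>i k'. asg s i = Some k' \<Longrightarrow> k' \<noteq> k" using bfk unfolding bag_free_def by blast
  have "I_ph ?s" using p by (simp add: I_ph_def)
  moreover have "I_p1 n ?s" using p by (simp add: I_p1_def)
  moreover have "I_cur n ?s" using I'(3) unfolding I_cur_def bfs by simp
  moreover have "I_asg n ?s" using I'(4) by (simp add: I_asg_def)
  moreover have "I_inj ?s" using I'(5) by (simp add: I_inj_def)
  moreover have "I_bag n m ?s" using I'(6) g(1,2) unfolding I_bag_def by auto
  moreover have "I_mod n ?s" using I'(7) c k unfolding I_mod_def bfs by auto
  moreover have "I_disj n ?s" using I'(8) gk unfolding I_disj_def by auto
  moreover have "I_val \<delta> m v ?s" using I'(9) notk unfolding I_val_def by simp
  moreover have "I_p2 \<delta> n m v ?s" unfolding I_p2_def af bfs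
  proof (intro impI ballI)
    fix j k' assume a: "ph ?s = 2" "j \<in> {1..n}" "agent_free s j" "k' \<in> {1..n}" "bag_free s k'" "bag ?s k' = initbag n k'"
    have "k' \<noteq> k"
    proof
      assume "k' = k" then have "g \<in> initbag n k'" using a(6) by auto
      thus False using gi a(4) by blast
    qed
    thus "val m v j (initbag n k') < 3/4 + \<delta>" using I'(10) a p unfolding I_p2_def by auto
  qed
  moreover have "I_modv \<delta> n m v ?s" unfolding I_modv_def af
  proof (intro impI ballI)
    fix k' j assume a: "k' \<in> {1..n}" "bag ?s k' \<noteq> initbag n k'" "j \<in> {1..n}" "agent_free s j"
    show "val m v j (bag ?s k') < 3/4 + \<delta> + val m v j {2*n+1}"
    proof (cases "k' = k")
      case True
      have v1: "val m v j (bag s k) < 3/4 + \<delta>" using nw a unfolding someone_wants_def by force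
      have g2: "2*n+1 \<in> {1..m}" "2*n+1 \<le> g" using g(1,2) by auto
      have "v j g \<le> v j (2*n+1)" using ord a(3) g(1) g2 unfolding ordered_def by blast
      hence "v j g \<le> val m v j {2*n+1}" using val_single[OF g2(1)] by simp
      moreover have "val m v j (bag ?s k) = val m v j (bag s k) + v j g"
        using val_insert[OF g(1) gk[OF k]] by simp
      ultimately show ?thesis using v1 True by simp
    next
      case False thus ?thesis using I'(11) a unfolding I_modv_def by simp
    qed
  qed
  moreover have "I_N11 \<delta> n m v ?s" using I'(12) notk unfolding I_N11_def af by simp
  ultimately show ?thesis unfolding ainv_def by blast
qed

lemma inv_step:
  assumes st: "step \<delta> n m v s s'" and I: "ainv \<delta> n m v s" and ord: "ordered n m v"
  shows "ainv \<delta> n m v s'"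
  using st
proof cases
  case (phase1_assign k i)
  have "cur s = None" using ainvD(2)[OF I] phase1_assign(2) unfolding I_p1_def by simp
  hence "s' = s\<lparr>asg := (asg s)(i := Some k), cur := None\<rparr>" using phase1_assign(1) by simp
  thus ?thesis using assign_pres[OF I phase1_assign(3,4,5)] phase1_assign(2) by simp
next
  case phase1_end
  thus ?thesis using end_pres[OF I] by simp
next
  case (phase2_pick k)
  thus ?thesis using pick_pres[OF I] by simp
next
  case (phase2_add k g)
  thus ?thesis using add_pres[OF I ord] by simp
next
  case (phase2_assign k i)
  have "k \<in> {1..n}" "bag_free s k" using ainvD(3)[OF I] phase2_assign(3) unfolding I_cur_def by auto
  thus ?thesis using assign_pres[OF I _ _ phase2_assign(4)] phase2_assign by simp
qed

lemma inv_reach: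
  assumes "(step \<delta> n m v)\<^sup>*\<^sup>* (init_st n) s" and "ordered n m v"
  shows "ainv \<delta> n m v s"
  using assms(1)
proof (induction rule: rtranclp_induct)
  case base thus ?case by (rule inv_init)
next
  case (step y z) thus ?case using inv_step assms(2) by blast
qed


lemma want_may:
  assumes "someone_wants \<delta> n m v s k"
  shows "\<exists>i. may_get \<delta> n m v s i k"
proof (cases "\<exists>j\<in>N11 \<delta> n m v. agent_free s j \<and> val m v j (bag s k) \<ge> 3/4 + \<delta>")
  case True
  then obtain j where "j \<in> N11 \<delta> n m v" "agent_free s j" "val m v j (bag s k) \<ge> 3/4 + \<delta>" by blast
  moreover have "j \<in> {1..n}" using N11_sub calculation(1) by blast
  ultimately show ?thesis unfolding may_get_def by blast
next
  case False
  then show ?thesis using assms unfolding may_get_def someone_wants_def by blast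
qed

lemma terminal_ph2:
  assumes I: "ainv \<delta> n m v s" and T: "\<not> (\<exists>s'. step \<delta> n m v s s')"
  shows "ph s = 2"
proof (rule ccontr)
  assume "ph s \<noteq> 2"
  hence p: "ph s = 1" using ainvD(1)[OF I] unfolding I_ph_def by auto
  show False
  proof (cases "\<exists>k\<in>{1..n}. bag_free s k \<and> someone_wants \<delta> n m v s k")
    case True
    then obtain k where k: "k \<in> {1..n}" "bag_free s k" "someone_wants \<delta> n m v s k" by blast
    then obtain i where "may_get \<delta> n m v s i k" using want_may by blast
    thus False using T step.phase1_assign[OF p k(1,2)] by blast
  next
    case False thus False using T step.phase1_end[OF p] by blast
  qed
qed

lemma all_assigned_finished:
  assumes I: "ainv \<delta> n m v s" and nb: "\<forall>k\<in>{1..n}. \<not> bag_free s k"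
  shows "finished n s"
proof -
  let ?A = "{i\<in>{1..n}. asg s i \<noteq> None}"
  let ?f = "\<lambda>i. the (asg s i)"
  have inj: "inj_on ?f ?A"
  proof (rule inj_onI)
    fix i j assume a: "i \<in> ?A" "j \<in> ?A" "?f i = ?f j"
    then obtain ki kj where "asg s i = Some ki" "asg s j = Some kj" by auto
    thus "i = j" using a ainvD(5)[OF I] unfolding I_inj_def by auto
  qed
  have sub: "{1..n} \<subseteq> ?f ` ?A"
  proof
    fix k assume k: "k \<in> {1..n}"
    then obtain i where i: "asg s i = Some k" using nb unfolding bag_free_def by blast
    hence "i \<in> {1..n}" using ainvD(4)[OF I] unfolding I_asg_def by blast
    thus "k \<in> ?f ` ?A" using i by force
  qed
  have "card {1..n} \<le> card ?A"
    using card_mono[OF _ sub] card_image[OF inj] by simp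
  moreover have "?A \<subseteq> {1..n}" by blast
  ultimately have "?A = {1..n}" using card_subset_eq[of "{1..n}" ?A] by (metis (no_types, lifting) card_seteq finite_atLeastAtMost)
  thus ?thesis unfolding finished_def by blast
qed

lemma val_UN:
  assumes "finite K" and "\<And>k k'. k \<in> K \<Longrightarrow> k' \<in> K \<Longrightarrow> k \<noteq> k' \<Longrightarrow> F k \<inter> F k' = {}"
  shows "(\<Sum>k\<in>K. val m v i (F k)) = val m v i (\<Union>k\<in>K. F k)"
proof -
  have "(\<Union>k\<in>K. F k) \<inter> {1..m} = (\<Union>k\<in>K. F k \<inter> {1..m})" by blast
  hence "val m v i (\<Union>k\<in>K. F k) = (\<Sum>g\<in>(\<Union>k\<in>K. F k \<inter> {1..m}). v i g)" by (simp add: val_def)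
  also have "\<dots> = (\<Sum>k\<in>K. \<Sum>g\<in>F k \<inter> {1..m}. v i g)"
    by (rule sum.UNION_disjoint) (use assms in auto)
  finally show ?thesis by (simp add: val_def)
qed

lemma val_total:
  assumes "normalized n m v" "i \<in> {1..n}"
  shows "val m v i {1..m} = n"
proof -
  obtain P where P: "is_partition n {1..m} P" "\<forall>j\<in>{1..n}. val m v i (P j) = 1"
    using assms unfolding normalized_def by blast
  have "(\<Sum>j\<in>{1..n}. val m v i (P j)) = val m v i (\<Union>j\<in>{1..n}. P j)"
    by (rule val_UN) (use P(1) in \<open>auto simp: is_partition_def\<close>)
  moreover have "(\<Union>j\<in>{1..n}. P j) = {1..m}" using P(1) by (simp add: is_partition_def)
  moreover have "(\<Sum>j\<in>{1..n}. val m v i (P j)) = n" using P(2) by simp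
  ultimately show ?thesis by simp
qed

lemma MMS_one:
  assumes "normalized n m v" "i \<in> {1..n}"
  shows "MMS m v i n {1..m} = 1"
proof -
  obtain P where P: "MMS m v i n {1..m} = Min ((\<lambda>j. val m v i (P j)) ` {1..n})" "\<forall>j\<in>{1..n}. val m v i (P j) = 1"
    using assms unfolding normalized_def by blast
  have "(\<lambda>j. val m v i (P j)) ` {1..n} = {1}" using P(2) assms(2) by force
  thus ?thesis using P(1) by simp
qed

lemma sum_bags:
  assumes I: "ainv \<delta> n m v s" and cov: "\<forall>g\<in>{1..m}. g \<notin> {1..2*n} \<longrightarrow> g \<in> used n s"
    and nz: "normalized n m v" and i: "i \<in> {1..n}"
  shows "(\<Sum>k\<in>{1..n}. val m v i (bag s k)) = n"
proof -
  have "(\<Sum>k\<in>{1..n}. val m v i (bag s k)) = val m v i (\<Union>k\<in>{1..n}. bag s k)"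
    by (rule val_UN) (use ainvD(8)[OF I] in \<open>auto simp: I_disj_def\<close>)
  also have "\<dots> = val m v i {1..m}"
  proof -
    have "(\<Union>k\<in>{1..n}. bag s k) \<inter> {1..m} = {1..m}"
    proof
      show "{1..m} \<subseteq> (\<Union>k\<in>{1..n}. bag s k) \<inter> {1..m}"
      proof
        fix g assume g: "g \<in> {1..m}"
        show "g \<in> (\<Union>k\<in>{1..n}. bag s k) \<inter> {1..m}"
        proof (cases "g \<in> {1..2*n}")
          case True
          then obtain k where "k \<in> {1..n}" "g \<in> initbag n k" using initbag_cover by blast
          thus ?thesis using g ainvD(6)[OF I] unfolding I_bag_def by blast
        next
          case False thus ?thesis using g cov unfolding used_def by blast
        qed
      qed
    qed blast
    thus ?thesis unfolding val_def by (metis Int_absorb inf.idem inf_assoc)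
  qed
  also have "\<dots> = n" by (rule val_total[OF nz i])
  finally show ?thesis .
qed




lemma max4:
  fixes p q r t c :: real
  assumes "p + q = r + t" "p \<le> r" "q \<le> r"
  shows "max p c + max q c \<le> max r c + max t c"
  using assms by (auto simp: max_def)

lemma sum_four:
  assumes "finite S" "a \<in> S" "b \<in> S" "c \<in> S" "d \<in> S" "a \<noteq> b" "a \<noteq> c" "a \<noteq> d" "b \<noteq> c" "b \<noteq> d" "c \<noteq> d"
  shows "(\<Sum>x\<in>S. f x) = f a + f b + f c + f d + (\<Sum>x\<in>S - {a,b,c,d}. f x)"
proof -
  have "S = {a,b,c,d} \<union> (S - {a,b,c,d})" using assms by auto
  hence "(\<Sum>x\<in>S. f x) = (\<Sum>x\<in>{a,b,c,d}. f x) + (\<Sum>x\<in>S - {a,b,c,d}. f x)"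
    by (metis Diff_disjoint assms(1) finite.emptyI finite.insertI finite_Diff sum.union_disjoint)
  thus ?thesis using assms by (simp add: add.assoc)
qed

definition is_inv :: "nat set \<Rightarrow> (nat \<Rightarrow> nat) \<Rightarrow> bool" where
  "is_inv S \<sigma> \<longleftrightarrow> (\<forall>x\<in>S. \<sigma> x \<in> S \<and> \<sigma> (\<sigma> x) = x \<and> \<sigma> x \<noteq> x)"

lemma bal_le:
  fixes w :: "nat \<Rightarrow> real" and c :: real
  assumes anti: "\<And>x y. x \<le> y \<Longrightarrow> w y \<le> w x"
  shows "is_inv {lo..<lo+2*h} \<sigma> \<Longrightarrow>
    2 * (\<Sum>t<h. max (w (lo+t) + w (lo+2*h-1-t)) c) \<le> (\<Sum>x\<in>{lo..<lo+2*h}. max (w x + w (\<sigma> x)) c)"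
proof (induction h arbitrary: lo \<sigma>)
  case 0 thus ?case by simp
next
  case (Suc h)
  let ?S = "{lo..<lo+2*Suc h}"
  let ?z = "lo + 2*h + 1"
  let ?G = "\<lambda>\<sigma>. (\<Sum>x\<in>?S. max (w x + w (\<sigma> x)) c)"
  have bal: "(\<Sum>t<Suc h. max (w (lo+t) + w (lo+2*Suc h-1-t)) c)
      = max (w lo + w ?z) c + (\<Sum>t<h. max (w (lo+1+t) + w (lo+1+2*h-1-t)) c)"
  proof -
    have "(\<Sum>t<Suc h. max (w (lo+t) + w (lo+2*Suc h-1-t)) c)
        = max (w (lo+0) + w (lo+2*Suc h-1-0)) c + (\<Sum>t<h. max (w (lo+Suc t) + w (lo+2*Suc h-1-Suc t)) c)"
      by (rule sum.lessThan_Suc_shift)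
    moreover have "\<And>t. t < h \<Longrightarrow> lo+2*Suc h-1-Suc t = lo+1+2*h-1-t" by simp
    ultimately show ?thesis by simp
  qed
  have caseA: "2 * (\<Sum>t<Suc h. max (w (lo+t) + w (lo+2*Suc h-1-t)) c) \<le> ?G \<tau>"
    if inv: "is_inv ?S \<tau>" and m: "\<tau> lo = ?z" for \<tau>
  proof -
    have "lo \<in> ?S" by simp
    hence "\<tau> (\<tau> lo) = lo" using inv unfolding is_inv_def by blast
    hence mz: "\<tau> ?z = lo" using m by simp
    let ?S' = "{lo+1..<lo+1+2*h}"
    have inv': "is_inv ?S' \<tau>"
      unfolding is_inv_def
    proof
      fix x assume x: "x \<in> ?S'"
      hence xS: "x \<in> ?S" by auto
      have a: "\<tau> x \<in> ?S" "\<tau> (\<tau> x) = x" "\<tau> x \<noteq> x" using inv xS unfolding is_inv_def by auto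
      have "\<tau> x \<noteq> lo"
      proof
        assume "\<tau> x = lo" hence "x = ?z" using a(2) m by simp
        thus False using x by simp
      qed
      moreover have "\<tau> x \<noteq> ?z"
      proof
        assume "\<tau> x = ?z" hence "x = lo" using a(2) mz by simp
        thus False using x by simp
      qed
      ultimately show "\<tau> x \<in> ?S' \<and> \<tau> (\<tau> x) = x \<and> \<tau> x \<noteq> x" using a by auto
    qed
    have IH: "2 * (\<Sum>t<h. max (w (lo+1+t) + w (lo+1+2*h-1-t)) c) \<le> (\<Sum>x\<in>?S'. max (w x + w (\<tau> x)) c)"
      using Suc.IH[OF inv'] .
    have sp: "?S = insert lo (insert ?z ?S')" by auto
    have "?G \<tau> = max (w lo + w ?z) c + max (w ?z + w lo) c + (\<Sum>x\<in>?S'. max (w x + w (\<tau> x)) c)"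
      unfolding sp using m mz by (simp add: add.assoc)
    thus ?thesis using IH bal by (simp add: add.commute)
  qed
  show ?case
  proof (cases "\<sigma> lo = ?z")
    case True thus ?thesis using caseA Suc.prems by blast
  next
    case False
    let ?j = "\<sigma> lo" and ?i = "\<sigma> ?z"
    have loS: "lo \<in> ?S" and zS: "?z \<in> ?S" by auto
    have pj: "?j \<in> ?S" "\<sigma> ?j = lo" "?j \<noteq> lo" using Suc.prems loS unfolding is_inv_def by auto
    have pi: "?i \<in> ?S" "\<sigma> ?i = ?z" "?i \<noteq> ?z" using Suc.prems zS unfolding is_inv_def by auto
    have d1: "?i \<noteq> lo" using pi(2) False by auto
    have d2: "?i \<noteq> ?j" using pi(2) pj(2) by auto
    have d3: "lo \<noteq> ?z" by simp
    define \<tau> where "\<tau> = (\<lambda>x. if x = lo then ?z else if x = ?z then lo else if x = ?i then ?j else if x = ?j then ?i else \<sigma> x)"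
    have t1: "\<tau> lo = ?z" by (simp add: \<tau>_def)
    have tz: "\<tau> ?z = lo" using d3 by (simp add: \<tau>_def)
    have ti: "\<tau> ?i = ?j" using d1 pi(3) by (simp add: \<tau>_def)
    have tj: "\<tau> ?j = ?i" using d1 d2 pj(3) False by (simp add: \<tau>_def)
    have tinv: "is_inv ?S \<tau>"
      unfolding is_inv_def
    proof
      fix x assume xS: "x \<in> ?S"
      have sx: "\<sigma> x \<in> ?S" "\<sigma> (\<sigma> x) = x" "\<sigma> x \<noteq> x" using Suc.prems xS unfolding is_inv_def by auto
      have to: "\<And>y. y \<notin> {lo, ?z, ?i, ?j} \<Longrightarrow> \<tau> y = \<sigma> y" by (simp add: \<tau>_def)
      show "\<tau> x \<in> ?S \<and> \<tau> (\<tau> x) = x \<and> \<tau> x \<noteq> x"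
      proof (cases "x \<in> {lo, ?z, ?i, ?j}")
        case True
        moreover have "x = lo \<Longrightarrow> ?thesis" using t1 tz zS d3 by simp
        moreover have "x = ?z \<Longrightarrow> ?thesis" using t1 tz loS d3 by simp
        moreover have "x = ?i \<Longrightarrow> ?thesis" using ti tj pj(1) d2 by simp
        moreover have "x = ?j \<Longrightarrow> ?thesis" using ti tj pi(1) d2 by simp
        ultimately show ?thesis by blast
      next
        case nx: False
        have n1: "\<sigma> x \<noteq> lo" using sx(2) pj(2) nx by auto
        have n2: "\<sigma> x \<noteq> ?z" using sx(2) pi(2) nx by auto
        have n3: "\<sigma> x \<noteq> ?i" using sx(2) pi(2) nx by auto
        have n4: "\<sigma> x \<noteq> ?j" using sx(2) pj(2) nx by auto
        have "\<tau> x = \<sigma> x" using to nx by blast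
        moreover have "\<tau> (\<sigma> x) = \<sigma> (\<sigma> x)" using to n1 n2 n3 n4 by blast
        ultimately show ?thesis using sx by simp
      qed
    qed
    have le: "?G \<tau> \<le> ?G \<sigma>"
    proof -
      let ?f = "\<lambda>\<rho> x. max (w x + w (\<rho> x)) c"
      have fin: "finite ?S" by simp
      have same: "(\<Sum>x\<in>?S - {lo, ?z, ?i, ?j}. ?f \<tau> x) = (\<Sum>x\<in>?S - {lo, ?z, ?i, ?j}. ?f \<sigma> x)"
        by (rule sum.cong) (auto simp: \<tau>_def)
      have e1: "?G \<tau> = ?f \<tau> lo + ?f \<tau> ?z + ?f \<tau> ?i + ?f \<tau> ?j + (\<Sum>x\<in>?S - {lo, ?z, ?i, ?j}. ?f \<tau> x)"
        by (rule sum_four) (use fin loS zS pi pj d1 d2 d3 in auto)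
      have e2: "?G \<sigma> = ?f \<sigma> lo + ?f \<sigma> ?z + ?f \<sigma> ?i + ?f \<sigma> ?j + (\<Sum>x\<in>?S - {lo, ?z, ?i, ?j}. ?f \<sigma> x)"
        by (rule sum_four) (use fin loS zS pi pj d1 d2 d3 in auto)
      have v: "?f \<tau> lo = max (w lo + w ?z) c" "?f \<tau> ?z = max (w ?z + w lo) c"
        "?f \<tau> ?i = max (w ?i + w ?j) c" "?f \<tau> ?j = max (w ?j + w ?i) c"
        using t1 tz ti tj by simp_all
      have u: "?f \<sigma> lo = max (w lo + w ?j) c" "?f \<sigma> ?z = max (w ?z + w ?i) c"
        "?f \<sigma> ?i = max (w ?i + w ?z) c" "?f \<sigma> ?j = max (w ?j + w lo) c"
        using pi pj by auto
      have wi: "w ?i \<le> w lo" using anti pi(1) by auto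
      have wj: "w ?z \<le> w ?j" using anti pj(1) by auto
      have "max (w lo + w ?z) c + max (w ?i + w ?j) c \<le> max (w lo + w ?j) c + max (w ?i + w ?z) c"
        by (rule max4) (use wi wj in auto)
      thus ?thesis using e1 e2 v u same by (simp add: add.commute add.left_commute)
    qed
    show ?thesis using caseA[OF tinv t1] le by linarith
  qed
qed


definition extras :: "nat set \<Rightarrow> nat set" where
  "extras Z = Z - {Min Z, Min (Z - {Min Z})}"

definition Fx :: "(nat \<Rightarrow> real) \<Rightarrow> real \<Rightarrow> nat set \<Rightarrow> real" where
  "Fx w a Z = (\<Sum>h\<in>extras Z. max 0 (w h - a))"

lemma Fx_nonneg: "0 \<le> Fx w a Z"
  unfolding Fx_def by (rule sum_nonneg) simp

lemma min_lt_max: fixes Z :: "nat set" assumes "finite Z" "2 \<le> card Z" shows "Min Z < Max Z"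
proof -
  obtain x y where "x \<in> Z" "y \<in> Z" "x \<noteq> y"
    using assms by (metis One_nat_def card_le_Suc0_iff_eq not_less_eq_eq numeral_2_eq_2)
  hence "Min Z \<le> x" "Min Z \<le> y" "x \<le> Max Z" "y \<le> Max Z" using assms by auto
  moreover have "x < y \<or> y < x" using \<open>x \<noteq> y\<close> by arith
  ultimately show ?thesis by linarith
qed

lemma extras_remove_max:
  assumes fin: "finite Z" and c3: "3 \<le> card Z"
  shows "Max Z \<in> extras Z" "extras (Z - {Max Z}) = extras Z - {Max Z}"
proof -
  let ?m1 = "Min Z" and ?e = "Max Z"
  let ?Z1 = "Z - {?m1}"
  have ne: "Z \<noteq> {}" using c3 by auto
  have m1Z: "?m1 \<in> Z" and eZ: "?e \<in> Z" using fin ne by auto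
  have lt1: "?m1 < ?e" using min_lt_max[OF fin] c3 by simp
  have fin1: "finite ?Z1" using fin by simp
  have c1: "2 \<le> card ?Z1" using c3 m1Z fin by (simp add: card_Diff_singleton)
  have maxZ1: "Max ?Z1 = ?e"
  proof (rule Max_eqI[OF fin1])
    show "\<And>y. y \<in> ?Z1 \<Longrightarrow> y \<le> ?e" using fin by simp
    show "?e \<in> ?Z1" using eZ lt1 by simp
  qed
  let ?m2 = "Min ?Z1"
  have lt2: "?m2 < ?e" using min_lt_max[OF fin1 c1] maxZ1 by simp
  have "?Z1 \<noteq> {}" using c1 by (metis card.empty not_numeral_le_zero)
  hence m2Z1: "?m2 \<in> ?Z1" using fin1 by (intro Min_in) auto
  show "?e \<in> extras Z" unfolding extras_def using eZ lt1 lt2 by auto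
  have a: "Min (Z - {?e}) = ?m1"
    by (rule Min_eqI) (use fin m1Z lt1 in auto)
  have b: "Min ((Z - {?e}) - {?m1}) = ?m2"
  proof (rule Min_eqI)
    show "finite (Z - {?e} - {?m1})" using fin by simp
    show "\<And>y. y \<in> Z - {?e} - {?m1} \<Longrightarrow> ?m2 \<le> y" using fin1 by auto
    show "?m2 \<in> Z - {?e} - {?m1}" using m2Z1 lt2 by auto
  qed
  show "extras (Z - {?e}) = extras Z - {?e}" unfolding extras_def a b by auto
qed

lemma Fx_remove_max:
  assumes "finite Z" "3 \<le> card Z"
  shows "Fx w a (Z - {Max Z}) = Fx w a Z - max 0 (w (Max Z) - a)"
proof -
  have fe: "finite (extras Z)" using assms(1) unfolding extras_def by simp
  show ?thesis unfolding Fx_def extras_remove_max(2)[OF assms]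
    using sum_diff1[OF fe, of "\<lambda>h. max 0 (w h - a)"] extras_remove_max(1)[OF assms] by simp
qed

definition good_cfg :: "(nat \<Rightarrow> real) \<Rightarrow> real \<Rightarrow> real \<Rightarrow> nat set \<Rightarrow> (nat \<Rightarrow> nat set) \<Rightarrow> (nat \<Rightarrow> real) \<Rightarrow> bool" where
  "good_cfg w a c J Z b \<longleftrightarrow> finite J \<and> (\<forall>j\<in>J. finite (Z j)) \<and> (\<forall>j\<in>J. \<forall>j'\<in>J. j \<noteq> j' \<longrightarrow> Z j \<inter> Z j' = {}) \<and>
   (\<Sum>j\<in>J. card (Z j)) = 2 * card J \<and> (\<forall>j\<in>J. card (Z j) \<le> 1 \<longrightarrow> b j = 1) \<and>
   (\<forall>j\<in>J. (\<Sum>x\<in>Z j. w x) \<le> b j \<and> b j \<le> 1) \<and> (\<forall>j\<in>J. 2 \<le> card (Z j) \<longrightarrow> c + Fx w a (Z j) \<le> b j) \<and>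
   (\<forall>j\<in>J. \<forall>x\<in>Z j. 0 \<le> w x \<and> w x \<le> 1 - a)"

lemma inv_extend:
  assumes "is_inv S \<sigma>" "p \<notin> S" "q \<notin> S" "p \<noteq> q"
  shows "is_inv (insert p (insert q S)) (\<sigma>(p := q, q := p))"
proof -
  have "\<And>x. x \<in> S \<Longrightarrow> \<sigma> x \<in> S" using assms(1) unfolding is_inv_def by blast
  thus ?thesis using assms unfolding is_inv_def by auto
qed

lemma sum_extend:
  fixes w :: "nat \<Rightarrow> real" and c :: real
  assumes "is_inv S \<sigma>" "p \<notin> S" "q \<notin> S" "p \<noteq> q" "finite S"
  shows "(\<Sum>x\<in>insert p (insert q S). max (w x + w ((\<sigma>(p := q, q := p)) x)) c)
        = (\<Sum>x\<in>S. max (w x + w (\<sigma> x)) c) + 2 * max (w p + w q) c"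
proof -
  have st: "\<And>x. x \<in> S \<Longrightarrow> \<sigma> x \<in> S" using assms(1) unfolding is_inv_def by blast
  have "(\<Sum>x\<in>S. max (w x + w ((\<sigma>(p := q, q := p)) x)) c) = (\<Sum>x\<in>S. max (w x + w (\<sigma> x)) c)"
    by (rule sum.cong) (use assms(2,3) in auto)
  thus ?thesis using assms by (simp add: algebra_simps)
qed


lemma cfgD:
  assumes "good_cfg w a c J Z b"
  shows "finite J" "\<And>j. j \<in> J \<Longrightarrow> finite (Z j)" "\<And>j j'. j \<in> J \<Longrightarrow> j' \<in> J \<Longrightarrow> j \<noteq> j' \<Longrightarrow> Z j \<inter> Z j' = {}"
    "(\<Sum>j\<in>J. card (Z j)) = 2 * card J" "\<And>j. j \<in> J \<Longrightarrow> card (Z j) \<le> 1 \<Longrightarrow> b j = 1"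
    "\<And>j. j \<in> J \<Longrightarrow> (\<Sum>x\<in>Z j. w x) \<le> b j" "\<And>j. j \<in> J \<Longrightarrow> b j \<le> 1"
    "\<And>j. j \<in> J \<Longrightarrow> 2 \<le> card (Z j) \<Longrightarrow> c + Fx w a (Z j) \<le> b j"
    "\<And>j x. j \<in> J \<Longrightarrow> x \<in> Z j \<Longrightarrow> 0 \<le> w x" "\<And>j x. j \<in> J \<Longrightarrow> x \<in> Z j \<Longrightarrow> w x \<le> 1 - a"
  using assms unfolding good_cfg_def by blast+

lemma cfg_pair:
  assumes G: "good_cfg w a c J Z b" and j: "j \<in> J" "card (Z j) = 2"
  shows "good_cfg w a c (J - {j}) Z b"
proof -
  note D = cfgD[OF G]
  have "(\<Sum>j\<in>J. card (Z j)) = card (Z j) + (\<Sum>j\<in>J - {j}. card (Z j))" using sum.remove[OF D(1) j(1)] .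
  moreover have "card J = Suc (card (J - {j}))" by (metis card_Suc_Diff1 D(1) j(1))
  ultimately have "(\<Sum>j\<in>J - {j}. card (Z j)) = 2 * card (J - {j})" using D(4) j(2) by linarith
  thus ?thesis using G unfolding good_cfg_def by auto
qed

lemma sum_two:
  assumes "finite J" "j0 \<in> J" "j1 \<in> J" "j0 \<noteq> j1"
  shows "(\<Sum>j\<in>J. f j) = f j0 + f j1 + (\<Sum>j\<in>J - {j0} - {j1}. f j)"
proof -
  have "(\<Sum>j\<in>J. f j) = f j0 + (\<Sum>j\<in>J - {j0}. f j)" using sum.remove[OF assms(1,2)] .
  moreover have "(\<Sum>j\<in>J - {j0}. f j) = f j1 + (\<Sum>j\<in>J - {j0} - {j1}. f j)"
    using sum.remove[of "J - {j0}" j1 f] assms by simp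
  ultimately show ?thesis by (simp add: add.assoc)
qed

lemma cfg_move:
  assumes G: "good_cfg w a c J Z b" and a0: "0 \<le> a" and j0: "j0 \<in> J" "Z j0 = {}"
    and j1: "j1 \<in> J" "3 \<le> card (Z j1)" and e: "e = Max (Z j1)"
  shows "good_cfg w a c J (Z(j0 := {e}, j1 := Z j1 - {e})) b" (is "good_cfg _ _ _ _ ?Z _")
proof -
  note D = cfgD[OF G]
  have ne: "j0 \<noteq> j1" using j0 j1 by auto
  have fin1: "finite (Z j1)" using D(2) j1 by blast
  have eZ: "e \<in> Z j1" using e fin1 j1(2) by (metis Max_in card.empty not_numeral_le_zero)
  have card1: "card (Z j1 - {e}) = card (Z j1) - 1" using eZ by simp
  have eo: "\<And>j'. j' \<in> J \<Longrightarrow> j' \<noteq> j1 \<Longrightarrow> e \<notin> Z j'" using D(3) eZ j1(1) by blast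
  have Zj: "\<And>j. ?Z j = (if j = j1 then Z j1 - {e} else if j = j0 then {e} else Z j)" using ne by simp
  have sc: "(\<Sum>j\<in>J. card (?Z j)) = (\<Sum>j\<in>J. card (Z j))"
  proof -
    have eq1: "(\<Sum>j\<in>J. card (?Z j)) = card (?Z j0) + card (?Z j1) + (\<Sum>j\<in>J - {j0} - {j1}. card (?Z j))"
      by (rule sum_two[OF D(1) j0(1) j1(1) ne])
    have eq2: "(\<Sum>j\<in>J - {j0} - {j1}. card (?Z j)) = (\<Sum>j\<in>J - {j0} - {j1}. card (Z j))"
      by (rule sum.cong) auto
    have eq3: "card (?Z j0) + card (?Z j1) = card (Z j0) + card (Z j1)" using ne card1 j0(2) j1(2) by simp
    have eq4: "(\<Sum>j\<in>J. card (Z j)) = card (Z j0) + card (Z j1) + (\<Sum>j\<in>J - {j0} - {j1}. card (Z j))"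
      by (rule sum_two[OF D(1) j0(1) j1(1) ne])
    show ?thesis using eq1 eq2 eq3 eq4 by linarith
  qed
  have F1: "Fx w a (Z j1 - {e}) \<le> Fx w a (Z j1)"
    using Fx_remove_max[OF fin1 j1(2)] e by simp
  have S1: "(\<Sum>x\<in>Z j1 - {e}. w x) = (\<Sum>x\<in>Z j1. w x) - w e" using sum_diff1[OF fin1, of w e] eZ by simp
  have we: "0 \<le> w e" "w e \<le> 1 - a" using D(9,10) j1(1) eZ by auto
  show ?thesis unfolding good_cfg_def
  proof (intro conjI ballI impI)
    show "finite J" by (rule D(1))
    fix j assume jJ: "j \<in> J"
    show "finite (?Z j)" using D(2) jJ j1(1) by (simp add: Zj)
    show "(\<Sum>x\<in>?Z j. w x) \<le> b j"
    proof -
      consider "j = j1" | "j = j0" | "j \<noteq> j1" "j \<noteq> j0" by blast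
      thus ?thesis
      proof cases
        case 1 thus ?thesis using S1 we D(6)[OF jJ] ne by simp
      next
        case 2 thus ?thesis using we a0 D(5)[OF jJ] j0(2) ne by simp
      next
        case 3 thus ?thesis using D(6)[OF jJ] by simp
      qed
    qed
    show "b j \<le> 1" using D(7) jJ .
    show "card (?Z j) \<le> 1 \<Longrightarrow> b j = 1"
    proof -
      assume cj: "card (?Z j) \<le> 1"
      consider "j = j1" | "j = j0" | "j \<noteq> j1" "j \<noteq> j0" by blast
      thus ?thesis
      proof cases
        case 1 thus ?thesis using cj card1 j1(2) by simp
      next
        case 2 thus ?thesis using D(5)[OF jJ] j0(2) by simp
      next
        case 3 thus ?thesis using D(5)[OF jJ] cj by simp
      qed
    qed
    show "2 \<le> card (?Z j) \<Longrightarrow> c + Fx w a (?Z j) \<le> b j"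
    proof -
      assume cj: "2 \<le> card (?Z j)"
      consider "j = j1" | "j = j0" | "j \<noteq> j1" "j \<noteq> j0" by blast
      thus ?thesis
      proof cases
        case 1 thus ?thesis using F1 D(8)[OF j1(1)] j1(2) by simp
      next
        case 2 thus ?thesis using cj ne by simp
      next
        case 3 thus ?thesis using D(8)[OF jJ] cj by simp
      qed
    qed
    fix x assume xZ: "x \<in> ?Z j"
    have "\<exists>j'\<in>J. x \<in> Z j'"
    proof (cases "j = j0")
      case True thus ?thesis using xZ ne eZ j1(1) by auto
    next
      case False thus ?thesis using xZ jJ by (cases "j = j1") auto
    qed
    then obtain j' where "j' \<in> J" "x \<in> Z j'" by blast
    thus "0 \<le> w x" "w x \<le> 1 - a" using D(9,10) by auto
  next
    fix j j' assume jj: "j \<in> J" "j' \<in> J" "j \<noteq> j'"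
    show "?Z j \<inter> ?Z j' = {}"
    proof -
      have gen: "\<And>p q. p \<in> J \<Longrightarrow> q \<in> J \<Longrightarrow> p \<noteq> q \<Longrightarrow> ?Z p \<subseteq> (if p = j0 then {e} else Z p) \<and> ?Z q \<subseteq> (if q = j0 then {e} else Z q)"
        using ne by auto
      show ?thesis
      proof (cases "j = j0 \<or> j' = j0")
        case True
        then consider "j = j0" | "j' = j0" by blast
        thus ?thesis
        proof cases
          case 1 thus ?thesis using jj eo ne by (cases "j' = j1") auto
        next
          case 2 thus ?thesis using jj eo ne by (cases "j = j1") auto
        qed
      next
        case False
        hence "?Z j \<subseteq> Z j" "?Z j' \<subseteq> Z j'" by auto
        thus ?thesis using D(3)[OF jj] by blast
      qed
    qed
  next
    show "(\<Sum>j\<in>J. card (?Z j)) = 2 * card J" using sc D(4) by simp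
  qed
qed


lemma cfg_single:
  assumes G: "good_cfg w a c J Z b" and a0: "0 \<le> a" and j1: "j1 \<in> J" "Z j1 = {g}"
    and j2: "j2 \<in> J" "3 \<le> card (Z j2)" and e: "e = Max (Z j2)"
  shows "good_cfg w a c (J - {j1}) (Z(j2 := Z j2 - {e})) (b(j2 := b j2 - max 0 (w e - a)))"
    (is "good_cfg _ _ _ ?J ?Z ?b")
proof -
  note D = cfgD[OF G]
  have ne: "j1 \<noteq> j2" using j1 j2 by auto
  have fin2: "finite (Z j2)" using D(2) j2 by blast
  have eZ: "e \<in> Z j2" using e fin2 j2(2) by (metis Max_in card.empty not_numeral_le_zero)
  have card2: "card (Z j2 - {e}) = card (Z j2) - 1" using eZ by simp
  have sc: "(\<Sum>j\<in>?J. card (?Z j)) = 2 * card ?J"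
  proof -
    have eq1: "(\<Sum>j\<in>J. card (Z j)) = card (Z j1) + card (Z j2) + (\<Sum>j\<in>J - {j1} - {j2}. card (Z j))"
      by (rule sum_two[OF D(1) j1(1) j2(1) ne])
    have eq2: "(\<Sum>j\<in>?J. card (?Z j)) = card (?Z j2) + (\<Sum>j\<in>?J - {j2}. card (?Z j))"
      by (rule sum.remove) (use D(1) j2(1) ne in auto)
    have eq3: "(\<Sum>j\<in>?J - {j2}. card (?Z j)) = (\<Sum>j\<in>J - {j1} - {j2}. card (Z j))"
      by (rule sum.cong) auto
    have eq4: "card (?Z j2) + 1 = card (Z j2)" using card2 j2(2) by simp
    have eq5: "card J = Suc (card ?J)" by (metis card_Suc_Diff1 D(1) j1(1))
    have eq6: "card (Z j1) = 1" using j1(2) by simp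
    show ?thesis using eq1 eq2 eq3 eq4 eq5 eq6 D(4) by linarith
  qed
  have F2: "Fx w a (Z j2 - {e}) = Fx w a (Z j2) - max 0 (w e - a)"
    using Fx_remove_max[OF fin2 j2(2)] e by simp
  have S2: "(\<Sum>x\<in>Z j2 - {e}. w x) = (\<Sum>x\<in>Z j2. w x) - w e" using sum_diff1[OF fin2, of w e] eZ by simp
  have we: "0 \<le> w e" using D(9) j2(1) eZ by auto
  have mx: "max 0 (w e - a) \<le> w e" using we a0 by simp
  show ?thesis unfolding good_cfg_def
  proof (intro conjI ballI impI)
    show "finite ?J" using D(1) by simp
    fix j assume jJ: "j \<in> ?J"
    hence jJ': "j \<in> J" by simp
    show "finite (?Z j)" using D(2) jJ' j2(1) by simp
    show "(\<Sum>x\<in>?Z j. w x) \<le> ?b j"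
    proof (cases "j = j2")
      case True
      have "(\<Sum>x\<in>Z j2 - {e}. w x) \<le> b j2 - max 0 (w e - a)" using S2 mx D(6)[OF j2(1)] by linarith
      thus ?thesis using True by simp
    next
      case False thus ?thesis using D(6)[OF jJ'] by simp
    qed
    show "?b j \<le> 1"
    proof (cases "j = j2")
      case True thus ?thesis using D(7)[OF j2(1)] by simp
    next
      case False thus ?thesis using D(7)[OF jJ'] by simp
    qed
    show "card (?Z j) \<le> 1 \<Longrightarrow> ?b j = 1"
    proof (cases "j = j2")
      case True thus "card (?Z j) \<le> 1 \<Longrightarrow> ?b j = 1" using card2 j2(2) by simp
    next
      case False thus "card (?Z j) \<le> 1 \<Longrightarrow> ?b j = 1" using D(5)[OF jJ'] by simp
    qed
    show "2 \<le> card (?Z j) \<Longrightarrow> c + Fx w a (?Z j) \<le> ?b j"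
    proof (cases "j = j2")
      case True thus "2 \<le> card (?Z j) \<Longrightarrow> c + Fx w a (?Z j) \<le> ?b j" using F2 D(8)[OF j2(1)] j2(2) by simp
    next
      case False thus "2 \<le> card (?Z j) \<Longrightarrow> c + Fx w a (?Z j) \<le> ?b j" using D(8)[OF jJ'] by simp
    qed
    fix x assume xZ: "x \<in> ?Z j"
    have "x \<in> Z j" using xZ by (cases "j = j2") auto
    thus "0 \<le> w x" "w x \<le> 1 - a" using D(9,10) jJ' by auto
  next
    fix j j' assume jj: "j \<in> ?J" "j' \<in> ?J" "j \<noteq> j'"
    have "?Z j \<subseteq> Z j" "?Z j' \<subseteq> Z j'" by auto
    thus "?Z j \<inter> ?Z j' = {}" using D(3)[of j j'] jj by blast
  next
    show "(\<Sum>j\<in>?J. card (?Z j)) = 2 * card ?J" by (rule sc)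
  qed
qed


lemma claimM:
  fixes w :: "nat \<Rightarrow> real" and c a :: real
  assumes c1: "c \<le> 1" and a0: "0 \<le> a"
  shows "good_cfg w a c J Z b \<Longrightarrow> \<exists>\<sigma>. is_inv (\<Union>j\<in>J. Z j) \<sigma> \<and>
           (\<Sum>x\<in>(\<Union>j\<in>J. Z j). max (w x + w (\<sigma> x)) c) \<le> 2 * (\<Sum>j\<in>J. b j)"
proof (induction "3 * (\<Sum>j\<in>J. card (Z j)) + card {j\<in>J. Z j = {}}" arbitrary: J Z b rule: less_induct)
  case (less J Z b)
  note G = less.prems
  note D = cfgD[OF G]
  let ?S = "\<Union>j\<in>J. Z j"
  have finS: "finite ?S" using D(1,2) by blast
  show ?case
  proof (cases "\<exists>j\<in>J. card (Z j) = 2")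
    case True
    then obtain j where j: "j \<in> J" "card (Z j) = 2" by blast
    then obtain p q where pq: "Z j = {p, q}" "p \<noteq> q" by (meson card_2_iff)
    let ?J = "J - {j}"
    have G': "good_cfg w a c ?J Z b" by (rule cfg_pair[OF G j])
    have lt: "3 * (\<Sum>j\<in>?J. card (Z j)) + card {j\<in>?J. Z j = {}} < 3 * (\<Sum>j\<in>J. card (Z j)) + card {j\<in>J. Z j = {}}"
    proof -
      have "(\<Sum>j\<in>J. card (Z j)) = card (Z j) + (\<Sum>j\<in>?J. card (Z j))" using sum.remove[OF D(1) j(1)] .
      moreover have "card {j\<in>?J. Z j = {}} \<le> card {j\<in>J. Z j = {}}" by (rule card_mono) (use D(1) in auto)
      ultimately show ?thesis using j(2) by linarith
    qed
    obtain \<sigma>0 where s0: "is_inv (\<Union>j\<in>?J. Z j) \<sigma>0" "(\<Sum>x\<in>(\<Union>j\<in>?J. Z j). max (w x + w (\<sigma>0 x)) c) \<le> 2 * (\<Sum>j\<in>?J. b j)"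
      using less.hyps[OF lt G'] by blast
    let ?S' = "\<Union>j\<in>?J. Z j"
    have pS: "p \<notin> ?S'" "q \<notin> ?S'" using D(3) j(1) pq by blast+
    have Seq: "?S = insert p (insert q ?S')" using j(1) pq by blast
    have finS': "finite ?S'" using D(1,2) by blast
    have inv: "is_inv ?S (\<sigma>0(p := q, q := p))" unfolding Seq by (rule inv_extend[OF s0(1) pS pq(2)])
    have eq: "(\<Sum>x\<in>?S. max (w x + w ((\<sigma>0(p := q, q := p)) x)) c)
        = (\<Sum>x\<in>?S'. max (w x + w (\<sigma>0 x)) c) + 2 * max (w p + w q) c"
      unfolding Seq by (rule sum_extend[OF s0(1) pS pq(2) finS'])
    have mx: "max (w p + w q) c \<le> b j"
    proof -
      have "w p + w q = (\<Sum>x\<in>Z j. w x)" using pq by simp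
      moreover have "c \<le> b j" using D(8)[OF j(1)] j(2) Fx_nonneg[of w a "Z j"] by simp
      ultimately show ?thesis using D(6)[OF j(1)] by simp
    qed
    have bs: "(\<Sum>j\<in>J. b j) = b j + (\<Sum>j\<in>?J. b j)" using sum.remove[OF D(1) j(1)] .
    have "(\<Sum>x\<in>?S. max (w x + w ((\<sigma>0(p := q, q := p)) x)) c) \<le> 2 * (\<Sum>j\<in>?J. b j) + 2 * b j"
      unfolding eq by (rule add_mono[OF s0(2)]) (rule mult_left_mono[OF mx], simp)
    also have "\<dots> = 2 * (\<Sum>j\<in>J. b j)" using bs by simp
    finally have "(\<Sum>x\<in>?S. max (w x + w ((\<sigma>0(p := q, q := p)) x)) c) \<le> 2 * (\<Sum>j\<in>J. b j)" .
    thus ?thesis using inv by blast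
  next
    case no2: False
    show ?thesis
    proof (cases "\<exists>j\<in>J. card (Z j) \<le> 1")
      case False
      hence "\<forall>j\<in>J. 3 \<le> card (Z j)" using no2 by fastforce
      hence "(\<Sum>j\<in>J. 3) \<le> (\<Sum>j\<in>J. card (Z j))" by (intro sum_mono) auto
      hence "card J = 0" using D(4) by simp
      hence "J = {}" using D(1) by simp
      thus ?thesis by (intro exI[of _ id]) (simp add: is_inv_def)
    next
      case True
      then obtain j where j: "j \<in> J" "card (Z j) \<le> 1" by blast
      obtain j' where j': "j' \<in> J" "3 \<le> card (Z j')"
      proof -
        have "\<exists>j'\<in>J. 3 \<le> card (Z j')"
        proof (rule ccontr)
          assume "\<not> ?thesis"
          hence le1: "\<forall>j\<in>J. card (Z j) \<le> 1" using no2 by fastforce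
          hence "(\<Sum>j\<in>J. card (Z j)) \<le> (\<Sum>j\<in>J. 1)" by (intro sum_mono) auto
          hence "2 * card J \<le> card J" using D(4) by simp
          moreover have "card J > 0" using j(1) D(1) card_gt_0_iff by blast
          ultimately show False by simp
        qed
        thus ?thesis using that by blast
      qed
      let ?e = "Max (Z j')"
      have finj': "finite (Z j')" using D(2) j'(1) by blast
      have eZ: "?e \<in> Z j'" using finj' j'(2) by (metis Max_in card.empty not_numeral_le_zero)
      have ne2: "Z j' - {?e} \<noteq> {}"
      proof
        assume "Z j' - {?e} = {}"
        hence "card (Z j' - {?e}) = 0" by (simp only: card.empty)
        thus False using card_Diff_singleton[OF eZ] j'(2) by simp
      qed
      show ?thesis
      proof (cases "Z j = {}")
        case True
        let ?Z = "Z(j := {?e}, j' := Z j' - {?e})"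
        have G': "good_cfg w a c J ?Z b" by (rule cfg_move[OF G a0 j(1) True j'(1) j'(2) refl])
        have ne: "j \<noteq> j'" using True j' by auto
        have Zj: "\<And>k. ?Z k = (if k = j' then Z j' - {?e} else if k = j then {?e} else Z k)" using ne by simp
        have lt: "3 * (\<Sum>k\<in>J. card (?Z k)) + card {k\<in>J. ?Z k = {}} < 3 * (\<Sum>k\<in>J. card (Z k)) + card {k\<in>J. Z k = {}}"
        proof -
          have sc: "(\<Sum>k\<in>J. card (?Z k)) = (\<Sum>k\<in>J. card (Z k))" using cfgD(4)[OF G'] D(4) by simp
          have ce: "{k\<in>J. ?Z k = {}} \<subseteq> {k\<in>J. Z k = {}} - {j}"
          proof
            fix k assume k: "k \<in> {k\<in>J. ?Z k = {}}"
            have "k \<noteq> j" using k ne by auto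
            moreover have "k \<noteq> j'" using k ne2 by (auto simp: Zj)
            ultimately show "k \<in> {k\<in>J. Z k = {}} - {j}" using k by (auto simp: Zj)
          qed
          have "card {k\<in>J. ?Z k = {}} \<le> card ({k\<in>J. Z k = {}} - {j})" by (rule card_mono) (use D(1) ce in auto)
          also have "\<dots> < card {k\<in>J. Z k = {}}" by (rule card_Diff1_less) (use D(1) j(1) True in auto)
          finally show ?thesis using sc by linarith
        qed
        obtain \<sigma> where s: "is_inv (\<Union>k\<in>J. ?Z k) \<sigma>" "(\<Sum>x\<in>(\<Union>k\<in>J. ?Z k). max (w x + w (\<sigma> x)) c) \<le> 2 * (\<Sum>k\<in>J. b k)"
          using less.hyps[OF lt G'] by blast
        have "(\<Union>k\<in>J. ?Z k) = ?S"
        proof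
          show "(\<Union>k\<in>J. ?Z k) \<subseteq> ?S" using eZ j'(1) by (auto simp: Zj split: if_splits)
          show "?S \<subseteq> (\<Union>k\<in>J. ?Z k)"
          proof
            fix x assume "x \<in> ?S"
            then obtain k where k: "k \<in> J" "x \<in> Z k" by blast
            show "x \<in> (\<Union>k\<in>J. ?Z k)"
            proof (cases "k = j'")
              case True
              show ?thesis
              proof (cases "x = ?e")
                case True thus ?thesis using j(1) ne by (intro UN_I[of j]) auto
              next
                case False thus ?thesis using k \<open>k = j'\<close> by (intro UN_I[of j']) auto
              qed
            next
              case False
              hence "k \<noteq> j" using k True by auto
              thus ?thesis using k False by (intro UN_I[of k]) auto
            qed
          qed
        qed
        thus ?thesis using s by auto
      next
        case False
        then obtain g where g: "Z j = {g}" using j(2) by (metis card_0_eq card_1_singletonE D(2)[OF j(1)] le_SucE One_nat_def le_zero_eq)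
        let ?J = "J - {j}"
        let ?Z = "Z(j' := Z j' - {?e})"
        let ?b = "b(j' := b j' - max 0 (w ?e - a))"
        have G': "good_cfg w a c ?J ?Z ?b" by (rule cfg_single[OF G a0 j(1) g j'(1) j'(2) refl])
        have ne: "j \<noteq> j'" using g j' by auto
        have lt: "3 * (\<Sum>k\<in>?J. card (?Z k)) + card {k\<in>?J. ?Z k = {}} < 3 * (\<Sum>k\<in>J. card (Z k)) + card {k\<in>J. Z k = {}}"
        proof -
          have s1: "(\<Sum>k\<in>?J. card (?Z k)) = 2 * card ?J" using cfgD(4)[OF G'] .
          have s2: "card J = Suc (card ?J)" by (metis card_Suc_Diff1 D(1) j(1))
          have ce: "{k\<in>?J. ?Z k = {}} \<subseteq> {k\<in>J. Z k = {}}"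
          proof
            fix k assume k: "k \<in> {k\<in>?J. ?Z k = {}}"
            have "k \<noteq> j'" using k ne2 by auto
            thus "k \<in> {k\<in>J. Z k = {}}" using k by auto
          qed
          have "card {k\<in>?J. ?Z k = {}} \<le> card {k\<in>J. Z k = {}}" by (rule card_mono) (use D(1) ce in auto)
          thus ?thesis using s1 s2 D(4) by linarith
        qed
        obtain \<sigma>0 where s0: "is_inv (\<Union>k\<in>?J. ?Z k) \<sigma>0"
            "(\<Sum>x\<in>(\<Union>k\<in>?J. ?Z k). max (w x + w (\<sigma>0 x)) c) \<le> 2 * (\<Sum>k\<in>?J. ?b k)"
          using less.hyps[OF lt G'] by blast
        let ?S' = "\<Union>k\<in>?J. ?Z k"
        have gS: "g \<notin> ?S'"
        proof
          assume "g \<in> ?S'"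
          then obtain k where k: "k \<in> ?J" "g \<in> ?Z k" by blast
          hence "g \<in> Z k" by (cases "k = j'") auto
          thus False using D(3)[of j k] j(1) k(1) g by auto
        qed
        have eS: "?e \<notin> ?S'"
        proof
          assume "?e \<in> ?S'"
          then obtain k where k: "k \<in> ?J" "?e \<in> ?Z k" by blast
          have "k \<noteq> j'" using k by auto
          hence "?e \<in> Z k" using k by auto
          thus False using D(3)[of j' k] j'(1) k(1) eZ \<open>k \<noteq> j'\<close> by auto
        qed
        have ge: "g \<noteq> ?e" using D(3)[of j j'] j(1) j'(1) ne g eZ by auto
        have Seq: "?S = insert g (insert ?e ?S')"
        proof
          show "?S \<subseteq> insert g (insert ?e ?S')"
          proof
            fix x assume "x \<in> ?S"
            then obtain k where k: "k \<in> J" "x \<in> Z k" by blast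
            show "x \<in> insert g (insert ?e ?S')"
            proof (cases "k = j")
              case True thus ?thesis using k g by simp
            next
              case False
              show ?thesis
              proof (cases "k = j' \<and> x = ?e")
                case True thus ?thesis by simp
              next
                case F2: False
                hence "x \<in> ?Z k" using k by auto
                thus ?thesis using k False by blast
              qed
            qed
          qed
          show "insert g (insert ?e ?S') \<subseteq> ?S"
          proof -
            have "?S' \<subseteq> ?S" by auto
            thus ?thesis using g j(1) eZ j'(1) by blast
          qed
        qed
        have finS': "finite ?S'" using finS Seq by (metis finite_insert)
        have inv: "is_inv ?S (\<sigma>0(g := ?e, ?e := g))" unfolding Seq by (rule inv_extend[OF s0(1) gS eS ge])
        have sumeq: "(\<Sum>x\<in>?S. max (w x + w ((\<sigma>0(g := ?e, ?e := g)) x)) c)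
            = (\<Sum>x\<in>?S'. max (w x + w (\<sigma>0 x)) c) + 2 * max (w g + w ?e) c"
          unfolding Seq by (rule sum_extend[OF s0(1) gS eS ge finS'])
        have bsum: "(\<Sum>k\<in>?J. ?b k) = (\<Sum>k\<in>J. b k) - b j - max 0 (w ?e - a)"
        proof -
          have "(\<Sum>k\<in>?J. ?b k) = ?b j' + (\<Sum>k\<in>?J - {j'}. ?b k)" by (rule sum.remove) (use D(1) j'(1) ne in auto)
          also have "(\<Sum>k\<in>?J - {j'}. ?b k) = (\<Sum>k\<in>?J - {j'}. b k)" by (rule sum.cong) auto
          also have "(\<Sum>k\<in>J. b k) = b j + b j' + (\<Sum>k\<in>J - {j} - {j'}. b k)" by (rule sum_two[OF D(1) j(1) j'(1) ne])
          ultimately show ?thesis by simp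
        qed
        have bj: "b j = 1" using D(5)[OF j(1)] j(2) .
        have wg: "w g \<le> 1 - a" using D(10)[OF j(1)] g by simp
        have key: "max (w g + w ?e) c \<le> 1 + max 0 (w ?e - a)" using wg c1 by (simp add: max_def)
        show ?thesis
        proof (intro exI[of _ "\<sigma>0(g := ?e, ?e := g)"] conjI inv)
          have "(\<Sum>x\<in>?S. max (w x + w ((\<sigma>0(g := ?e, ?e := g)) x)) c)
              \<le> 2 * (\<Sum>k\<in>?J. ?b k) + 2 * (1 + max 0 (w ?e - a))"
            unfolding sumeq by (rule add_mono[OF s0(2)]) (rule mult_left_mono[OF key], simp)
          also have "\<dots> = 2 * (\<Sum>k\<in>J. b k)" unfolding bsum bj by simp
          finally show "(\<Sum>x\<in>?S. max (w x + w ((\<sigma>0(g := ?e, ?e := g)) x)) c) \<le> 2 * (\<Sum>k\<in>J. b k)" .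
        qed
      qed
    qed
  qed
qed


lemma pos_part_sum:
  fixes w :: "nat \<Rightarrow> real" and a :: real
  assumes "finite X" "\<forall>x\<in>X. 0 \<le> w x" "0 \<le> a"
  shows "(\<Sum>h\<in>X. max 0 (w h - a)) \<le> max 0 ((\<Sum>h\<in>X. w h) - a)"
  using assms
proof (induction X rule: finite_induct)
  case empty thus ?case by simp
next
  case (insert x F)
  have IH: "(\<Sum>h\<in>F. max 0 (w h - a)) \<le> max 0 ((\<Sum>h\<in>F. w h) - a)" using insert by simp
  have nn: "0 \<le> w x" "0 \<le> (\<Sum>h\<in>F. w h)" using insert by (auto intro: sum_nonneg)
  have "(\<Sum>h\<in>insert x F. max 0 (w h - a)) = max 0 (w x - a) + (\<Sum>h\<in>F. max 0 (w h - a))"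
    using insert by simp
  also have "\<dots> \<le> max 0 (w x - a) + max 0 ((\<Sum>h\<in>F. w h) - a)" using IH by simp
  also have "\<dots> \<le> max 0 (w x + (\<Sum>h\<in>F. w h) - a)" using nn insert(5) by (simp add: max_def)
  also have "\<dots> = max 0 ((\<Sum>h\<in>insert x F. w h) - a)" using insert by simp
  finally show ?case .
qed

lemma Fx_bound:
  fixes w :: "nat \<Rightarrow> real" and a :: real
  assumes fin: "finite Z" and nn: "\<forall>x\<in>Z. 0 \<le> w x" and anti: "\<And>x y. x \<le> y \<Longrightarrow> w y \<le> w x"
    and tot: "(\<Sum>x\<in>Z. w x) \<le> 1" and a0: "0 \<le> a" and a1: "a \<le> 1/4"
  shows "Fx w a Z \<le> max (1/3 - a) (1 - 4*a)"
proof (cases "extras Z = {}")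
  case True thus ?thesis using a1 by (simp add: Fx_def)
next
  case False
  let ?X = "extras Z"
  let ?m1 = "Min Z" and ?m2 = "Min (Z - {Min Z})"
  have XZ: "?X \<subseteq> Z" unfolding extras_def by auto
  have finX: "finite ?X" using fin XZ finite_subset by blast
  have Zne: "Z \<noteq> {}" using False XZ by auto
  have m1: "?m1 \<in> Z" using fin Zne by simp
  have Z1ne: "Z - {?m1} \<noteq> {}" using False unfolding extras_def by auto
  have m2: "?m2 \<in> Z - {?m1}" using fin Z1ne by (intro Min_in) auto
  have ltm: "\<And>h. h \<in> ?X \<Longrightarrow> ?m1 \<le> h \<and> ?m2 \<le> h"
  proof -
    fix h assume h: "h \<in> ?X"
    hence "h \<in> Z - {?m1}" unfolding extras_def by auto
    thus "?m1 \<le> h \<and> ?m2 \<le> h" using fin by (auto intro: Min_le)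
  qed
  let ?h = "Min ?X"
  have hX: "?h \<in> ?X" using finX False by simp
  have wh: "w ?h \<le> w ?m1" "w ?h \<le> w ?m2" using ltm[OF hX] anti by auto
  let ?R = "(\<Sum>x\<in>?X - {?h}. w x)"
  have tot2: "w ?m1 + w ?m2 + w ?h + ?R \<le> 1"
  proof -
    have d: "?m1 \<noteq> ?m2" "?h \<noteq> ?m1" "?h \<noteq> ?m2" using m2 hX unfolding extras_def by auto
    have sub: "{?m1, ?m2} \<union> ?X \<subseteq> Z" using m1 m2 XZ by auto
    have disj: "{?m1, ?m2} \<inter> ?X = {}" unfolding extras_def by auto
    have "(\<Sum>x\<in>{?m1, ?m2} \<union> ?X. w x) \<le> (\<Sum>x\<in>Z. w x)"
      by (rule sum_mono2[OF fin sub]) (use nn in auto)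
    moreover have "(\<Sum>x\<in>{?m1, ?m2} \<union> ?X. w x) = w ?m1 + w ?m2 + (\<Sum>x\<in>?X. w x)"
      using sum.union_disjoint[OF _ finX disj, of w] d by simp
    moreover have "(\<Sum>x\<in>?X. w x) = w ?h + ?R" using sum.remove[OF finX hX] .
    ultimately show ?thesis using tot by linarith
  qed
  have F: "Fx w a Z = max 0 (w ?h - a) + (\<Sum>x\<in>?X - {?h}. max 0 (w x - a))"
    unfolding Fx_def using sum.remove[OF finX hX] .
  have nnX: "\<forall>x\<in>?X - {?h}. 0 \<le> w x" using nn XZ by auto
  have pp: "(\<Sum>x\<in>?X - {?h}. max 0 (w x - a)) \<le> max 0 (?R - a)"
    by (rule pos_part_sum) (use finX nnX a0 in auto)
  show ?thesis
  proof (cases "w ?h \<le> a")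
    case True
    have "\<forall>x\<in>?X - {?h}. max 0 (w x - a) = 0"
    proof
      fix x assume "x \<in> ?X - {?h}"
      hence "?h \<le> x" using finX by auto
      hence "w x \<le> a" using anti True by (meson order_trans)
      thus "max 0 (w x - a) = 0" by simp
    qed
    hence "Fx w a Z = 0" using F True by simp
    thus ?thesis using a1 by simp
  next
    case False
    show ?thesis
    proof (cases "?R \<le> a")
      case True
      hence "Fx w a Z \<le> w ?h - a" using F pp False by simp
      moreover have "3 * w ?h \<le> 1" using tot2 wh nnX sum_nonneg[of "?X - {?h}" w] by (smt (verit) nnX)
      ultimately show ?thesis by simp
    next
      case Rg: False
      hence "Fx w a Z \<le> w ?h + ?R - 2 * a" using F pp False by simp
      moreover have "w ?h + ?R \<le> 1 - 2 * w ?h" using tot2 wh by linarith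
      ultimately show ?thesis using False by simp
    qed
  qed
qed


definition wv :: "nat \<Rightarrow> (nat \<Rightarrow> nat \<Rightarrow> real) \<Rightarrow> nat \<Rightarrow> nat \<Rightarrow> real" where
  "wv m v i j = (if j \<in> {1..m} then v i j else 0)"

lemma val_wv: "finite S \<Longrightarrow> val m v i S = (\<Sum>j\<in>S. wv m v i j)"
  unfolding val_def wv_def by (rule sum.inter_restrict)

lemma wv_nonneg: "additive_instance n m v \<Longrightarrow> i \<in> {1..n} \<Longrightarrow> 0 \<le> wv m v i j"
  unfolding wv_def additive_instance_def by auto

lemma wv_anti:
  assumes "additive_instance n m v" "ordered n m v" "i \<in> {1..n}" "1 \<le> p" "p \<le> q"
  shows "wv m v i q \<le> wv m v i p"
proof (cases "q \<in> {1..m}")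
  case True
  hence "p \<in> {1..m}" using assms by auto
  thus ?thesis using True assms unfolding wv_def ordered_def by auto
next
  case False
  have "wv m v i q = 0" unfolding wv_def by (rule if_not_P[OF False])
  moreover have "0 \<le> wv m v i p" by (rule wv_nonneg[OF assms(1,3)])
  ultimately show ?thesis by simp
qed

lemma val_pair: "p \<noteq> q \<Longrightarrow> val m v i {p, q} = wv m v i p + wv m v i q"
  by (simp add: val_wv)

lemma N2_x_small:
  assumes oni: "ONI \<delta> n m v" and i: "i \<in> {1..n}" and nN1: "i \<notin> N1 n m v"
  shows "val m v i {2*n+1} < 1/12 + \<delta>"
proof -
  have ad: "additive_instance n m v" and ord: "ordered n m v" and nz: "normalized n m v"
    and irr: "irreducible n m v (3/4 + \<delta>)" using oni unfolding ONI_def by auto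
  let ?W = "wv m v i"
  obtain k where k: "k \<in> {1..n}" "val m v i (initbag n k) > 1" using nN1 i unfolding N1_def by force
  define b where "b = 2*n - k + 1"
  have kb: "k < b" "b \<le> 2*n" "1 \<le> k" using k unfolding b_def by auto
  have vk: "val m v i (initbag n k) = ?W k + ?W b" unfolding initbag_def b_def[symmetric] using kb by (simp add: val_pair)
  have x: "val m v i {2*n+1} = ?W (2*n+1)" by (simp add: val_wv)
  have v1: "?W 1 + ?W (2*n+1) < 3/4 + \<delta>"
  proof -
    have "val m v i {1, 2*n+1} < 3/4 + \<delta>" using irr i unfolding irreducible_def by blast
    moreover have "(1::nat) \<noteq> 2*n+1" using i by auto
    ultimately show ?thesis using val_pair[of 1 "2*n+1" m v i] by simp
  qed
  have Wk: "?W k \<le> ?W 1" by (rule wv_anti[OF ad ord i]) (use kb in auto)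
  have b3: "3 * ?W b \<le> 1"
  proof (cases "b \<le> m")
    case False thus ?thesis by (simp add: wv_def)
  next
    case bm: True
    obtain P where P: "is_partition n {1..m} P" "\<forall>j\<in>{1..n}. val m v i (P j) = 1"
      using nz i unfolding normalized_def by blast
    have cov: "\<And>g. g \<in> {1..m} \<Longrightarrow> \<exists>j\<in>{1..n}. g \<in> P j" using P(1) unfolding is_partition_def by blast
    have disj: "\<And>j j'. j \<in> {1..n} \<Longrightarrow> j' \<in> {1..n} \<Longrightarrow> j \<noteq> j' \<Longrightarrow> P j \<inter> P j' = {}"
      using P(1) unfolding is_partition_def by blast
    define part where "part = (\<lambda>g. SOME j. j \<in> {1..n} \<and> g \<in> P j)"
    have pt: "\<And>g. g \<in> {1..m} \<Longrightarrow> part g \<in> {1..n} \<and> g \<in> P (part g)"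
    proof -
      fix g assume "g \<in> {1..m}"
      hence "\<exists>j. j \<in> {1..n} \<and> g \<in> P j" using cov by blast
      thus "part g \<in> {1..n} \<and> g \<in> P (part g)" unfolding part_def by (rule someI_ex)
    qed
    have ub: "\<And>j T. j \<in> {1..n} \<Longrightarrow> T \<subseteq> P j \<Longrightarrow> T \<subseteq> {1..m} \<Longrightarrow> (\<Sum>g\<in>T. ?W g) \<le> 1"
    proof -
      fix j T assume j: "j \<in> {1..n}" and T: "T \<subseteq> P j" "T \<subseteq> {1..m}"
      have finT: "finite T" using T(2) finite_subset by blast
      have "(\<Sum>g\<in>T. ?W g) = (\<Sum>g\<in>T. v i g)" using T(2) by (intro sum.cong) (auto simp: wv_def)
      also have "\<dots> \<le> (\<Sum>g\<in>P j \<inter> {1..m}. v i g)"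
        by (rule sum_mono2) (use T ad i in \<open>auto simp: additive_instance_def\<close>)
      also have "\<dots> = 1" using P(2) j by (simp add: val_def)
      finally show "(\<Sum>g\<in>T. ?W g) \<le> 1" .
    qed
    have sep: "\<And>g h. g \<in> {1..k} \<Longrightarrow> h \<in> {1..b} \<Longrightarrow> g \<noteq> h \<Longrightarrow> part g \<noteq> part h"
    proof
      fix g h assume g: "g \<in> {1..k}" and h: "h \<in> {1..b}" and gh: "g \<noteq> h" and eq: "part g = part h"
      have gm: "g \<in> {1..m}" and hm: "h \<in> {1..m}" using g h kb bm by auto
      have "{g, h} \<subseteq> P (part g)" using pt[OF gm] pt[OF hm] eq by auto
      hence "(\<Sum>x\<in>{g,h}. ?W x) \<le> 1" using ub[of "part g" "{g,h}"] pt[OF gm] gm hm by auto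
      hence "?W g + ?W h \<le> 1" using gh by simp
      moreover have "?W k \<le> ?W g" by (rule wv_anti[OF ad ord i]) (use g in auto)
      moreover have "?W b \<le> ?W h" by (rule wv_anti[OF ad ord i]) (use h in auto)
      ultimately show False using k(2) vk by linarith
    qed
    let ?K = "{1..k}" and ?M = "{k+1..b}"
    have injK: "inj_on part ?K"
      by (rule inj_onI) (use sep kb in force)
    have imK: "part ` ?K \<subseteq> {1..n}" using pt kb bm by auto
    have imM: "part ` ?M \<subseteq> {1..n} - part ` ?K"
    proof
      fix y assume "y \<in> part ` ?M"
      then obtain h where h: "h \<in> ?M" "y = part h" by blast
      have "h \<in> {1..m}" using h kb bm by auto
      hence "y \<in> {1..n}" using pt h by auto
      moreover have "y \<notin> part ` ?K"
      proof
        assume "y \<in> part ` ?K"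
        then obtain g where g: "g \<in> ?K" "y = part g" by blast
        have "h \<in> {1..b}" "g \<noteq> h" using h(1) g(1) kb by auto
        thus False using sep[OF g(1)] g(2) h(2) by blast
      qed
      ultimately show "y \<in> {1..n} - part ` ?K" by blast
    qed
    have cK: "card (part ` ?K) = k" using card_image[OF injK] by simp
    have cM: "card (part ` ?M) \<le> n - k"
    proof -
      have "card (part ` ?M) \<le> card ({1..n} - part ` ?K)" by (rule card_mono[OF _ imM]) simp
      also have "\<dots> = n - k" using card_Diff_subset[OF _ imK] cK by (simp add: finite_subset[OF imK])
      finally show ?thesis .
    qed
    have "\<exists>j\<in>part ` ?M. 3 \<le> card {h\<in>?M. part h = j}"
    proof (rule ccontr)
      assume na: "\<not> (\<exists>j\<in>part ` ?M. 3 \<le> card {h\<in>?M. part h = j})"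
      have le2: "\<forall>j\<in>part ` ?M. card {h\<in>?M. part h = j} \<le> 2"
      proof
        fix j assume "j \<in> part ` ?M"
        hence "\<not> 3 \<le> card {h\<in>?M. part h = j}" using na by blast
        thus "card {h\<in>?M. part h = j} \<le> 2" by simp
      qed
      have Meq: "?M = (\<Union>j\<in>part ` ?M. {h\<in>?M. part h = j})" by blast
      have "card (\<Union>j\<in>part ` ?M. {h\<in>?M. part h = j}) = (\<Sum>j\<in>part ` ?M. card {h\<in>?M. part h = j})"
        by (rule card_UN_disjoint) auto
      hence "card ?M = (\<Sum>j\<in>part ` ?M. card {h\<in>?M. part h = j})" using Meq by simp
      also have "\<dots> \<le> (\<Sum>j\<in>part ` ?M. 2)" by (rule sum_mono) (use le2 in auto)
      also have "\<dots> = 2 * card (part ` ?M)" by simp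
      finally have "card ?M \<le> 2 * (n - k)" using cM by linarith
      moreover have "card ?M = 2*n - 2*k + 1" using kb unfolding b_def by simp
      ultimately show False using kb k(1) by simp
    qed
    then obtain j where j: "j \<in> part ` ?M" "3 \<le> card {h\<in>?M. part h = j}" by blast
    let ?F = "{h\<in>?M. part h = j}"
    have Fm: "?F \<subseteq> {1..m}" using kb bm by auto
    have FP: "?F \<subseteq> P j" using pt Fm by auto
    have jn: "j \<in> {1..n}" using j(1) imM by auto
    have "(\<Sum>g\<in>?F. ?W b) \<le> (\<Sum>g\<in>?F. ?W g)"
      by (rule sum_mono) (rule wv_anti[OF ad ord i], auto)
    also have "\<dots> \<le> 1" by (rule ub[OF jn FP Fm])
    finally have "card ?F * ?W b \<le> 1" by simp
    moreover have "3 * ?W b \<le> card ?F * ?W b"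
      using j(2) wv_nonneg[OF ad i, of b] by (intro mult_right_mono) auto
    ultimately show ?thesis by linarith
  qed
  have "?W k > 2/3" using k(2) vk b3 by linarith
  thus ?thesis using x v1 Wk by linarith
qed


lemma N2_bound:
  assumes d: "0 \<le> \<delta>" "\<delta> \<le> 0.011" and oni: "ONI \<delta> n m v" and i: "i \<in> {1..n}" and nN1: "i \<notin> N1 n m v"
  shows "(\<Sum>k\<in>{1..n}. max (val m v i (initbag n k)) (3/4 + \<delta> + val m v i {2*n+1})) \<le> n"
proof -
  have ad: "additive_instance n m v" and ord: "ordered n m v" and nz: "normalized n m v"
    and irr: "irreducible n m v (3/4 + \<delta>)" using oni unfolding ONI_def by auto
  define w where "w = (\<lambda>j. wv m v i (max 1 j))"
  define x where "x = val m v i {2*n+1}"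
  define c where "c = 3/4 + \<delta> + x"
  define a where "a = 1/4 - \<delta>"
  have nn: "\<And>j. 0 \<le> w j" unfolding w_def using wv_nonneg[OF ad i] by blast
  have anti: "\<And>p q. p \<le> q \<Longrightarrow> w q \<le> w p" unfolding w_def by (rule wv_anti[OF ad ord i]) auto
  have wj: "\<And>j. 1 \<le> j \<Longrightarrow> w j = wv m v i j" unfolding w_def by (simp add: max_def)
  have xs: "x < 1/12 + \<delta>" unfolding x_def by (rule N2_x_small[OF oni i nN1])
  have x0: "0 \<le> x" unfolding x_def by (simp add: val_wv wv_nonneg[OF ad i])
  have c1: "c \<le> 1" unfolding c_def using xs d by simp
  have a0: "0 \<le> a" "a \<le> 1/4" unfolding a_def using d by auto
  have w1: "wv m v i 1 < 3/4 + \<delta>"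
  proof -
    have "val m v i {1} < 3/4 + \<delta>" using irr i unfolding irreducible_def by blast
    thus ?thesis by (simp add: val_wv)
  qed
  have wub: "\<And>j. w j \<le> 1 - a"
  proof -
    fix j have "w j \<le> w 1"
    proof (cases "j = 0")
      case True thus ?thesis by (simp add: w_def)
    next
      case False thus ?thesis using anti[of 1 j] by simp
    qed
    thus "w j \<le> 1 - a" using w1 wj[of 1] unfolding a_def by simp
  qed
  obtain P where P: "is_partition n {1..m} P" "\<forall>j\<in>{1..n}. val m v i (P j) = 1"
    using nz i unfolding normalized_def by blast
  have Pm: "\<And>j. j \<in> {1..n} \<Longrightarrow> P j \<subseteq> {1..m}" using P(1) unfolding is_partition_def by blast
  have Pcov: "(\<Union>j\<in>{1..n}. P j) = {1..m}" using P(1) unfolding is_partition_def by blast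
  have Pdisj: "\<And>j j'. j \<in> {1..n} \<Longrightarrow> j' \<in> {1..n} \<Longrightarrow> j \<noteq> j' \<Longrightarrow> P j \<inter> P j' = {}"
    using P(1) unfolding is_partition_def by blast
  define Z where "Z = (\<lambda>j. (P j \<inter> {1..2*n}) \<union> (if j = 1 then {m+1..2*n} else {}))"
  have Zsub: "\<And>j. Z j \<subseteq> {1..2*n}" unfolding Z_def by auto
  have finZ: "\<And>j. finite (Z j)" using Zsub finite_subset by blast
  have Zcov: "(\<Union>j\<in>{1..n}. Z j) = {1..2*n}"
  proof
    show "(\<Union>j\<in>{1..n}. Z j) \<subseteq> {1..2*n}" using Zsub by blast
    show "{1..2*n} \<subseteq> (\<Union>j\<in>{1..n}. Z j)"
    proof
      fix g assume g: "g \<in> {1..2*n}"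
      show "g \<in> (\<Union>j\<in>{1..n}. Z j)"
      proof (cases "g \<le> m")
        case True
        hence "g \<in> {1..m}" using g by simp
        then obtain j where "j \<in> {1..n}" "g \<in> P j" using Pcov by blast
        thus ?thesis using g unfolding Z_def by blast
      next
        case False
        hence "g \<in> Z 1" using g unfolding Z_def by auto
        moreover have "(1::nat) \<in> {1..n}" using i by simp
        ultimately show ?thesis by blast
      qed
    qed
  qed
  have Zdisj: "\<And>j j'. j \<in> {1..n} \<Longrightarrow> j' \<in> {1..n} \<Longrightarrow> j \<noteq> j' \<Longrightarrow> Z j \<inter> Z j' = {}"
  proof -
    fix j j' assume jj: "j \<in> {1..n}" "j' \<in> {1..n}" "j \<noteq> j'"
    have "P j \<inter> P j' = {}" by (rule Pdisj[OF jj])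
    moreover have "P j \<inter> {m+1..2*n} = {}" "P j' \<inter> {m+1..2*n} = {}" using Pm jj by fastforce+
    ultimately show "Z j \<inter> Z j' = {}" unfolding Z_def using jj(3) by auto
  qed
  have Zsum: "\<And>j. j \<in> {1..n} \<Longrightarrow> (\<Sum>g\<in>Z j. w g) \<le> 1"
  proof -
    fix j assume j: "j \<in> {1..n}"
    have "(\<Sum>g\<in>Z j. w g) = (\<Sum>g\<in>Z j. wv m v i g)"
    proof (rule sum.cong)
      fix g assume "g \<in> Z j"
      hence "1 \<le> g" using Zsub[of j] by auto
      thus "w g = wv m v i g" by (rule wj)
    qed simp
    also have "\<dots> = val m v i (Z j)" using val_wv[OF finZ] by simp
    also have "\<dots> \<le> val m v i (P j)"
    proof -
      have "Z j \<inter> {1..m} \<subseteq> P j \<inter> {1..m}" unfolding Z_def by auto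
      thus ?thesis unfolding val_def
        by (intro sum_mono2) (use ad j i in \<open>auto simp: additive_instance_def\<close>)
    qed
    also have "\<dots> = 1" using P(2) j by simp
    finally show "(\<Sum>g\<in>Z j. w g) \<le> 1" .
  qed
  have G: "good_cfg w a c {1..n} Z (\<lambda>_. 1)"
    unfolding good_cfg_def
  proof (intro conjI ballI impI)
    show "finite {1..n}" by simp
    fix j assume j: "j \<in> {1..n}"
    show "finite (Z j)" by (rule finZ)
    show "(\<Sum>g\<in>Z j. w g) \<le> 1" by (rule Zsum[OF j])
    show "(1::real) \<le> 1" by simp
    show "(1::real) = 1" by simp
    show "c + Fx w a (Z j) \<le> 1"
    proof -
      have "Fx w a (Z j) \<le> max (1/3 - a) (1 - 4*a)"
        by (rule Fx_bound[OF finZ _ anti Zsum[OF j] a0]) (use nn in auto)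
      moreover have "c + max (1/3 - a) (1 - 4*a) \<le> 1" unfolding c_def a_def using xs d by (simp add: max_def)
      ultimately show ?thesis by linarith
    qed
    fix g assume "g \<in> Z j"
    show "0 \<le> w g" by (rule nn)
    show "w g \<le> 1 - a" by (rule wub)
  next
    fix j j' assume "j \<in> {1..n}" "j' \<in> {1..n}" "j \<noteq> j'"
    thus "Z j \<inter> Z j' = {}" by (rule Zdisj)
  next
    have "(\<Sum>j\<in>{1..n}. card (Z j)) = card (\<Union>j\<in>{1..n}. Z j)"
      by (rule card_UN_disjoint[symmetric]) (use finZ Zdisj in auto)
    also have "\<dots> = 2 * n" using Zcov by simp
    finally show "(\<Sum>j\<in>{1..n}. card (Z j)) = 2 * card {1..n}" by simp
  qed
  obtain \<sigma> where s: "is_inv (\<Union>j\<in>{1..n}. Z j) \<sigma>"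
      "(\<Sum>y\<in>(\<Union>j\<in>{1..n}. Z j). max (w y + w (\<sigma> y)) c) \<le> 2 * (\<Sum>j\<in>{1..n}. (1::real))"
    using claimM[OF c1 a0(1) G] by blast
  have S2: "{1..<1 + 2*n} = {1..2*n}" by auto
  have bal: "2 * (\<Sum>t<n. max (w (1+t) + w (1+2*n-1-t)) c) \<le> (\<Sum>y\<in>{1..<1+2*n}. max (w y + w (\<sigma> y)) c)"
  proof (rule bal_le[OF anti])
    show "is_inv {1..<1+2*n} \<sigma>" using s(1) unfolding S2 Zcov .
  qed
  have bal': "2 * (\<Sum>t<n. max (w (1+t) + w (1+2*n-1-t)) c) \<le> (\<Sum>y\<in>{1..2*n}. max (w y + w (\<sigma> y)) c)"
    using bal unfolding S2 .
  have s2': "(\<Sum>y\<in>{1..2*n}. max (w y + w (\<sigma> y)) c) \<le> 2 * real n"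
    using s(2) unfolding Zcov by simp
  have le: "(\<Sum>t<n. max (w (1+t) + w (1+2*n-1-t)) c) \<le> n"
    using bal' s2' by linarith
  have "(\<Sum>k\<in>{1..n}. max (val m v i (initbag n k)) c) = (\<Sum>t<n. max (val m v i (initbag n (Suc t))) c)"
    using sum.atLeast1_atMost_eq[of "\<lambda>k. max (val m v i (initbag n k)) c" n] by simp
  also have "\<dots> = (\<Sum>t<n. max (w (1+t) + w (1+2*n-1-t)) c)"
  proof (rule sum.cong)
    fix t assume t: "t \<in> {..<n}"
    have ne: "Suc t \<noteq> 2*n - Suc t + 1" using t by auto
    have "val m v i (initbag n (Suc t)) = wv m v i (Suc t) + wv m v i (2*n - Suc t + 1)"
      unfolding initbag_def using val_pair[OF ne] by simp
    also have "\<dots> = w (1+t) + w (1+2*n-1-t)"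
    proof -
      have e1: "2*n - Suc t + 1 = 1+2*n-1-t" using t by auto
      have "w (1+t) = wv m v i (Suc t)" using wj[of "1+t"] by simp
      moreover have "w (1+2*n-1-t) = wv m v i (2*n - Suc t + 1)" unfolding e1 using t by (intro wj) auto
      ultimately show ?thesis by simp
    qed
    finally show "max (val m v i (initbag n (Suc t))) c = max (w (1+t) + w (1+2*n-1-t)) c" by simp
  qed simp
  finally show ?thesis using le unfolding c_def x_def by simp
qed


lemma arith_N11:
  fixes f :: "nat \<Rightarrow> real" and \<delta> :: real
  assumes sf: "(\<Sum>k\<in>{1..n}. f k) = n" and A: "A \<subseteq> {1..n}" and kc: "kc \<in> {1..n}" "kc \<notin> A"
    and fa: "\<forall>k\<in>A. f k \<le> 1 + 4*\<delta>/3" and fo: "\<forall>k\<in>{1..n} - A. f k \<le> 3/4 + \<delta>" and fkc: "f kc < 3/4 + \<delta>"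
    and cN: "card A + 1 \<le> N" and Nb: "real N \<le> real n * (1/4 - \<delta>) / (1/4 + \<delta>/3)" and d: "0 \<le> \<delta>"
  shows False
proof -
  let ?h = "\<lambda>k. if k \<in> A then 1 + 4*\<delta>/3 else 3/4 + \<delta>"
  have "(\<Sum>k\<in>{1..n}. f k) < (\<Sum>k\<in>{1..n}. ?h k)"
    by (rule sum_strict_mono_ex1) (use fa fo fkc kc in auto)
  also have "(\<Sum>k\<in>{1..n}. ?h k) = card A * (1 + 4*\<delta>/3) + card ({1..n} - A) * (3/4 + \<delta>)"
  proof -
    have "(\<Sum>k\<in>{1..n}. ?h k) = (\<Sum>k\<in>A. ?h k) + (\<Sum>k\<in>{1..n} - A. ?h k)"
      using A by (metis (no_types, lifting) finite_atLeastAtMost sum.subset_diff add.commute)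
    also have "\<dots> = card A * (1 + 4*\<delta>/3) + card ({1..n} - A) * (3/4 + \<delta>)" by simp
    finally show ?thesis .
  qed
  finally have lt: "real n < card A * (1 + 4*\<delta>/3) + card ({1..n} - A) * (3/4 + \<delta>)" using sf by simp
  have cd: "card ({1..n} - A) = n - card A" using A by (simp add: card_Diff_subset finite_subset)
  have cA: "card A \<le> n" using A by (metis card_atLeastAtMost card_mono finite_atLeastAtMost diff_Suc_1)
  have "real (card ({1..n} - A)) = real n - real (card A)" using cd cA by simp
  with lt have lt2: "real n < real (card A) * (1 + 4*\<delta>/3) + (real n - real (card A)) * (3/4 + \<delta>)" by simp
  have eq: "real (card A) * (1 + 4*\<delta>/3) + (real n - real (card A)) * (3/4 + \<delta>)
     = real n * (3/4 + \<delta>) + real (card A) * (1/4 + \<delta>/3)" by (simp add: field_simps)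
  have eq2: "real n * (1/4 - \<delta>) = real n - real n * (3/4 + \<delta>)" by (simp add: algebra_simps)
  have "real n * (1/4 - \<delta>) < real (card A) * (1/4 + \<delta>/3)"
    using lt2 eq eq2 by linarith
  also have "\<dots> \<le> (real N - 1) * (1/4 + \<delta>/3)" using cN d by (intro mult_right_mono) auto
  also have "\<dots> < real N * (1/4 + \<delta>/3)"
    using mult_strict_right_mono[of "real N - 1" "real N" "1/4+\<delta>/3"] d by simp
  also have "\<dots> \<le> real n * (1/4 - \<delta>)" using Nb d by (simp add: pos_le_divide_eq)
  finally show False by simp
qed

lemma x_bound:
  assumes oni: "ONI \<delta> n m v" and i: "i \<in> {1..n}"
  shows "val m v i {2*n+1} < (3/4 + \<delta>) / 3" "0 \<le> val m v i {2*n+1}"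
proof -
  have ad: "additive_instance n m v" and ord: "ordered n m v" and irr: "irreducible n m v (3/4 + \<delta>)"
    using oni unfolding ONI_def by auto
  have n1: "n \<ge> 1" using i by simp
  show "0 \<le> val m v i {2*n+1}" using ad i unfolding additive_instance_def val_def by (auto intro: sum_nonneg)
  show "val m v i {2*n+1} < (3/4 + \<delta>) / 3"
  proof (cases "2*n+1 \<le> m")
    case False
    hence "val m v i {2*n+1} = 0" by (simp add: val_def)
    moreover have "val m v i {1} \<ge> 0" using ad i unfolding additive_instance_def val_def by (auto intro: sum_nonneg)
    moreover have "val m v i {1} < 3/4 + \<delta>" using irr i unfolding irreducible_def by blast
    ultimately show ?thesis by simp
  next
    case True
    have e: "{2*n-1, 2*n, 2*n+1} \<inter> {1..m} = {2*n-1, 2*n, 2*n+1}" using True n1 by auto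
    have "val m v i {2*n-1, 2*n, 2*n+1} = v i (2*n-1) + v i (2*n) + v i (2*n+1)"
      unfolding val_def e using n1 by (subst sum.insert; auto)+
    moreover have "v i (2*n+1) \<le> v i (2*n-1)" "v i (2*n+1) \<le> v i (2*n)"
    proof -
      have o: "\<And>g h. g \<in> {1..m} \<Longrightarrow> h \<in> {1..m} \<Longrightarrow> g \<le> h \<Longrightarrow> v i h \<le> v i g"
        using ord i unfolding ordered_def by blast
      show "v i (2*n+1) \<le> v i (2*n-1)" by (rule o) (use True n1 in auto)
      show "v i (2*n+1) \<le> v i (2*n)" by (rule o) (use True n1 in auto)
    qed
    moreover have "val m v i {2*n-1, 2*n, 2*n+1} < 3/4 + \<delta>" using irr i unfolding irreducible_def by blast
    moreover have "val m v i {2*n+1} = v i (2*n+1)" using True by (simp add: val_def)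
    ultimately show ?thesis by simp
  qed
qed

lemma stuck_contra:
  assumes d: "0 \<le> \<delta>" "\<delta> \<le> 0.011" and oni: "ONI \<delta> n m v"
    and cb: "real (card (N11 \<delta> n m v)) \<le> real n * (1/4 - \<delta>) / (1/4 + \<delta>/3)"
    and I: "ainv \<delta> n m v s" and p: "ph s = 2" and c: "cur s = Some kc"
    and nw: "\<not> someone_wants \<delta> n m v s kc"
    and cov: "\<forall>g\<in>{1..m}. g \<notin> {1..2*n} \<longrightarrow> g \<in> used n s"
    and i: "i \<in> {1..n}" and fi: "agent_free s i"
  shows False
proof -
  have nz: "normalized n m v" using oni unfolding ONI_def by auto
  let ?f = "\<lambda>k. val m v i (bag s k)"
  let ?x = "val m v i {2*n+1}"
  have sf: "(\<Sum>k\<in>{1..n}. ?f k) = n" by (rule sum_bags[OF I cov nz i])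
  have kc: "kc \<in> {1..n}" "bag_free s kc" using ainvD(3)[OF I] c unfolding I_cur_def by auto
  have B2: "\<And>k. k \<in> {1..n} \<Longrightarrow> bag s k \<noteq> initbag n k \<Longrightarrow> ?f k < 3/4 + \<delta> + ?x"
    using ainvD(11)[OF I] i fi unfolding I_modv_def by blast
  have B3: "?f kc < 3/4 + \<delta>" using nw i fi unfolding someone_wants_def by force
  have B4: "\<And>k. k \<in> {1..n} \<Longrightarrow> bag_free s k \<Longrightarrow> k \<noteq> kc \<Longrightarrow> ?f k < 3/4 + \<delta>"
  proof -
    fix k assume k: "k \<in> {1..n}" "bag_free s k" "k \<noteq> kc"
    have "bag s k = initbag n k" using ainvD(7)[OF I] k c unfolding I_mod_def by auto
    thus "?f k < 3/4 + \<delta>" using ainvD(10)[OF I] p i fi k unfolding I_p2_def by auto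
  qed
  have xb: "?x < (3/4 + \<delta>) / 3" "0 \<le> ?x" using x_bound[OF oni i] by auto
  show False
  proof (cases "i \<in> N1 n m v")
    case N1: True
    have B1: "\<And>k. k \<in> {1..n} \<Longrightarrow> val m v i (initbag n k) \<le> 1" using N1 unfolding N1_def by blast
    show False
    proof (cases "i \<in> N11 \<delta> n m v")
      case False
      hence xs: "?x < 1/4 - 5*\<delta>" using N1 unfolding N11_def by auto
      have "(\<Sum>k\<in>{1..n}. ?f k) < (\<Sum>k\<in>{1..n}. 1)"
      proof (rule sum_strict_mono_ex1)
        show "\<forall>k\<in>{1..n}. ?f k \<le> 1"
        proof
          fix k assume k: "k \<in> {1..n}"
          show "?f k \<le> 1"
          proof (cases "bag s k = initbag n k")
            case True thus ?thesis using B1 k by simp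
          next
            case False thus ?thesis using B2[OF k False] xs d by simp
          qed
        qed
        show "\<exists>k\<in>{1..n}. ?f k < 1" using B3 kc d by force
      qed simp
      thus False using sf by simp
    next
      case True
      let ?A = "{k\<in>{1..n}. \<exists>i'\<in>N11 \<delta> n m v. asg s i' = Some k}"
      have cA: "card ?A + 1 \<le> card (N11 \<delta> n m v)"
      proof -
        define ow where "ow = (\<lambda>k. SOME i'. i' \<in> N11 \<delta> n m v \<and> asg s i' = Some k)"
        have o: "\<And>k. k \<in> ?A \<Longrightarrow> ow k \<in> N11 \<delta> n m v \<and> asg s (ow k) = Some k"
        proof -
          fix k assume "k \<in> ?A"
          hence ex: "\<exists>i'. i' \<in> N11 \<delta> n m v \<and> asg s i' = Some k" by blast
          show "ow k \<in> N11 \<delta> n m v \<and> asg s (ow k) = Some k" unfolding ow_def by (rule someI_ex[OF ex])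
        qed
        have inj: "inj_on ow ?A"
        proof (rule inj_onI)
          fix k1 k2 assume a: "k1 \<in> ?A" "k2 \<in> ?A" "ow k1 = ow k2"
          have "Some k1 = asg s (ow k1)" using o[OF a(1)] by simp
          also have "\<dots> = asg s (ow k2)" using a(3) by simp
          also have "\<dots> = Some k2" using o[OF a(2)] by simp
          finally show "k1 = k2" by simp
        qed
        have img: "ow ` ?A \<subseteq> N11 \<delta> n m v - {i}"
        proof
          fix j assume "j \<in> ow ` ?A"
          then obtain k where k: "k \<in> ?A" "j = ow k" by blast
          have "asg s j = Some k" "j \<in> N11 \<delta> n m v" using o[OF k(1)] k(2) by auto
          moreover have "asg s i = None" using fi by (simp add: agent_free_def)
          ultimately show "j \<in> N11 \<delta> n m v - {i}" by auto
        qed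
        have fin: "finite (N11 \<delta> n m v)" by (rule finite_subset[OF N11_sub]) simp
        have "card ?A \<le> card (N11 \<delta> n m v - {i})"
          using card_inj_on_le[OF inj img] fin by simp
        moreover have "card (N11 \<delta> n m v - {i}) + 1 = card (N11 \<delta> n m v)"
        proof -
          have "card (N11 \<delta> n m v) > 0" using True fin card_gt_0_iff by blast
          thus ?thesis using card_Diff_singleton[OF True] by simp
        qed
        ultimately show ?thesis by simp
      qed
      have fa: "\<forall>k\<in>?A. ?f k \<le> 1 + 4*\<delta>/3"
      proof
        fix k assume k: "k \<in> ?A"
        show "?f k \<le> 1 + 4*\<delta>/3"
        proof (cases "bag s k = initbag n k")
          case True
          have "k \<in> {1..n}" using k by blast
          thus ?thesis using B1[of k] True d by simp
        next
          case False
          have "k \<in> {1..n}" using k by blast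
          thus ?thesis using B2[of k] False xb by simp
        qed
      qed
      have fo: "\<forall>k\<in>{1..n} - ?A. ?f k \<le> 3/4 + \<delta>"
      proof
        fix k assume k: "k \<in> {1..n} - ?A"
        show "?f k \<le> 3/4 + \<delta>"
        proof (cases "bag_free s k")
          case True
          thus ?thesis using B4[of k] B3 k by (cases "k = kc") auto
        next
          case False
          then obtain i' where i': "asg s i' = Some k" unfolding bag_free_def by blast
          hence "i' \<notin> N11 \<delta> n m v" using k by blast
          thus ?thesis using ainvD(12)[OF I] i' True fi unfolding I_N11_def by fastforce
        qed
      qed
      have kcA: "kc \<notin> ?A" using kc(2) unfolding bag_free_def by blast
      show False
        by (rule arith_N11[OF sf _ kc(1) kcA fa fo B3 cA cb d(1)]) blast
    qed
  next
    case False
    have "(\<Sum>k\<in>{1..n}. ?f k) < (\<Sum>k\<in>{1..n}. max (val m v i (initbag n k)) (3/4 + \<delta> + ?x))"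
    proof (rule sum_strict_mono_ex1)
      show "\<forall>k\<in>{1..n}. ?f k \<le> max (val m v i (initbag n k)) (3/4 + \<delta> + ?x)"
      proof
        fix k assume k: "k \<in> {1..n}"
        show "?f k \<le> max (val m v i (initbag n k)) (3/4 + \<delta> + ?x)"
          using B2[OF k] by (cases "bag s k = initbag n k") auto
      qed
      show "\<exists>k\<in>{1..n}. ?f k < max (val m v i (initbag n k)) (3/4 + \<delta> + ?x)"
        using B3 kc xb by force
    qed simp
    thus False using sf N2_bound[OF d oni i False] by simp
  qed
qed

theorem theorem29:
  fixes \<delta> :: real and n m :: nat and v :: "nat \<Rightarrow> nat \<Rightarrow> real"
  assumes "0 \<le> \<delta>" and "\<delta> \<le> 0.011"
    and "ONI \<delta> n m v"
    and "real (card (N11 \<delta> n m v)) \<le> real n * (1/4 - \<delta>) / (1/4 + \<delta>/3)"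
  shows "\<forall>s. (step \<delta> n m v)\<^sup>*\<^sup>* (init_st n) s \<and> \<not> (\<exists>s'. step \<delta> n m v s s') \<longrightarrow>
           finished n s \<and> beta_MMS n m v (3/4 + \<delta>) (alloc_out m s)"
proof (intro allI impI, elim conjE)
  fix s assume R: "(step \<delta> n m v)\<^sup>*\<^sup>* (init_st n) s" and T: "\<not> (\<exists>s'. step \<delta> n m v s s')"
  have ord: "ordered n m v" and nz: "normalized n m v" using assms(3) unfolding ONI_def by auto
  have I: "ainv \<delta> n m v s" by (rule inv_reach[OF R ord])
  have p: "ph s = 2" by (rule terminal_ph2[OF I T])
  have fin: "finished n s"
  proof (cases "cur s")
    case None
    have "\<forall>k\<in>{1..n}. \<not> bag_free s k" using T step.phase2_pick[OF p None] by blast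
    thus ?thesis by (rule all_assigned_finished[OF I])
  next
    case (Some kc)
    have nw: "\<not> someone_wants \<delta> n m v s kc"
      using want_may T step.phase2_assign[OF p Some] by blast
    have cov: "\<forall>g\<in>{1..m}. g \<notin> {1..2*n} \<longrightarrow> g \<in> used n s"
      using T step.phase2_add[OF p Some nw] by blast
    show ?thesis
    proof (rule ccontr)
      assume "\<not> finished n s"
      then obtain i where "i \<in> {1..n}" "asg s i = None" unfolding finished_def by blast
      thus False using stuck_contra[OF assms(1-4) I p Some nw cov] by (simp add: agent_free_def)
    qed
  qed
  have alloc: "is_allocation n m (alloc_out m s)"
    unfolding is_allocation_def
  proof (intro conjI ballI impI)
    fix i assume "i \<in> {1..n}"
    show "alloc_out m s i \<subseteq> {1..m}" by (auto simp: alloc_out_def split: option.splits)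
  next
    fix i j assume ij: "i \<in> {1..n}" "j \<in> {1..n}" "i \<noteq> j"
    obtain ki kj where k: "asg s i = Some ki" "asg s j = Some kj" using fin ij unfolding finished_def by blast
    have "ki \<noteq> kj" using k ij ainvD(5)[OF I] unfolding I_inj_def by blast
    moreover have "ki \<in> {1..n}" "kj \<in> {1..n}" using k ainvD(4)[OF I] unfolding I_asg_def by blast+
    ultimately have "bag s ki \<inter> bag s kj = {}" using ainvD(8)[OF I] unfolding I_disj_def by blast
    thus "alloc_out m s i \<inter> alloc_out m s j = {}" using k by (auto simp: alloc_out_def)
  qed
  have vals: "\<forall>i\<in>{1..n}. val m v i (alloc_out m s i) \<ge> (3/4 + \<delta>) * MMS m v i n {1..m}"
  proof
    fix i assume i: "i \<in> {1..n}"
    obtain k where k: "asg s i = Some k" using fin i unfolding finished_def by blast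
    have "val m v i (alloc_out m s i) = val m v i (bag s k)"
      using k by (simp add: alloc_out_def val_def Int_assoc)
    thus "val m v i (alloc_out m s i) \<ge> (3/4 + \<delta>) * MMS m v i n {1..m}"
      using ainvD(9)[OF I] k MMS_one[OF nz i] unfolding I_val_def by simp
  qed
  show "finished n s \<and> beta_MMS n m v (3/4 + \<delta>) (alloc_out m s)"
    using fin alloc vals unfolding beta_MMS_def by blast
qed

end
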